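(* Let $q(x^{(1)},x^{(2)},y^{(1)},y^{(2)})$ be a joint distribution on finite sets such that $X^{(1)}=X^{(2)}$ almost surely, and write $X=X^{(1)}=X^{(2)}$. Let $r\ge1$ and let random variables $F_1,\dots,F_r$ (on finite alphabets) be jointly distributed with $(X,Y^{(1)},Y^{(2)})$ (whose joint law is the one induced by $q$) such that $Y^{(1)}-F_rF_{r-1}\cdots F_1X-Y^{(2)}$. Suppose positive reals $R'_1,\dots,R'_r$ satisfy $\sum_{i=1}^s R'_i> I(Y^{(1)}Y^{(2)};F_1\cdots F_s\mid X)$ for every $1\le s\le r$. Then the rate pair $\big(\sum_{i\text{ odd}}R'_i,\ \sum_{i\text{ even}}R'_i\big)$ is admissible for $q$ with two rounds of communication, i.e. with $r=2$ in the definition of admissibility.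
   Context: Two-node coordination problem. Fix finite alphabets and a joint pmf $q(x^{(1)},x^{(2)},y^{(1)},y^{(2)})$. For a natural number $r$, a code of blocklength $n$ with $r$ interactive rounds is as follows: node 1 observes $X^{(1)}_{1:n}$ and node 2 observes $X^{(2)}_{1:n}$, where $(X^{(1)}_i,X^{(2)}_i)_{i=1}^n$ are i.i.d. with the $(X^{(1)},X^{(2)})$-marginal of $q$; node 1 has private randomness $M_1$ and node 2 private randomness $M_2$, with $M_1$, $M_2$, $(X^{(1)}_{1:n},X^{(2)}_{1:n})$ mutually independent; there is no common randomness. Messages $C_1,\dots,C_r$ are sent, with $H(C_i\mid C_{1:i-1}X^{(1)}_{1:n}M_1)=0$ for odd $i$ and $H(C_i\mid C_{1:i-1}X^{(2)}_{1:n}M_2)=0$ for even $i$, and $\frac1n\sum_{i\text{ odd}}H(C_i)\le R_{12}$, $\frac1n\sum_{i\text{ even}}H(C_i)\le R_{21}$. Afterwards node 1 produces $\widehat Y^{(1)}_{1:n}$ as a function of $(X^{(1)}_{1:n},M_1,C_{1:r})$ and node 2 produces $\widehat Y^{(2)}_{1:n}$ as a function of $(X^{(2)}_{1:n},M_2,C_{1:r})$. The pair $(R_{12},R_{21})$ is admissible for $q$ with $r$ rounds if for every $\epsilon>0$ there is $n_0$ such that for all $n\ge n_0$ such a code exists for which the total variation ($\ell_1$) distance between the law of $(X^{(1)}_{1:n},X^{(2)}_{1:n},\widehat Y^{(1)}_{1:n},\widehat Y^{(2)}_{1:n})$ and the law of $n$ i.i.d. copies of $(X^{(1)},X^{(2)},Y^{(1)},Y^{(2)})\sim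 q$ is at most $\epsilon$. The notation $A-B-C$ means $A$ and $C$ are conditionally independent given $B$; juxtaposition denotes joint random variables. *)

theory Defs
  imports "HOL-Probability.Probability"
begin

primrec iid_pmf :: "nat \<Rightarrow> 'a pmf \<Rightarrow> 'a list pmf" where
  "iid_pmf 0 p = return_pmf []"
| "iid_pmf (Suc n) p = bind_pmf p (\<lambda>x. map_pmf (\<lambda>xs. x # xs) (iid_pmf n p))"

definition entropy_pmf :: "'a pmf \<Rightarrow> ennreal" where
  "entropy_pmf p = (\<integral>\<^sup>+ x. ennreal (if pmf p x = 0 then 0 else - pmf p x * log 2 (pmf p x)) \<partial>count_space UNIV)"

definition tv_dist :: "'a pmf \<Rightarrow> 'a pmf \<Rightarrow> ennreal" where
  "tv_dist p p' = (\<integral>\<^sup>+ x. ennreal \<bar>pmf p x - pmf p' x\<bar> \<partial>count_space UNIV)"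

definition markov_chain :: "'w pmf \<Rightarrow> ('w \<Rightarrow> 'a) \<Rightarrow> ('w \<Rightarrow> 'b) \<Rightarrow> ('w \<Rightarrow> 'c) \<Rightarrow> bool" where
  "markov_chain P fa fb fc \<longleftrightarrow> (\<forall>a b c.
     measure_pmf.prob P {w. fa w = a \<and> fb w = b \<and> fc w = c} * measure_pmf.prob P {w. fb w = b}
   = measure_pmf.prob P {w. fa w = a \<and> fb w = b} * measure_pmf.prob P {w. fb w = b \<and> fc w = c})"

definition cond_mutual_info :: "'w pmf \<Rightarrow> ('w \<Rightarrow> 'a) \<Rightarrow> ('w \<Rightarrow> 'b) \<Rightarrow> ('w \<Rightarrow> 'c) \<Rightarrow> real" where
  "cond_mutual_info P fa fb fc =
    (\<Sum>(a,b,c)\<in>set_pmf (map_pmf (\<lambda>w. (fa w, fb w, fc w)) P).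
       pmf (map_pmf (\<lambda>w. (fa w, fb w, fc w)) P) (a,b,c) *
       log 2 (pmf (map_pmf (\<lambda>w. (fa w, fb w, fc w)) P) (a,b,c) * pmf (map_pmf fc P) c
              / (pmf (map_pmf (\<lambda>w. (fa w, fc w)) P) (a,c) * pmf (map_pmf (\<lambda>w. (fb w, fc w)) P) (b,c))))"

text \<open>Odd-numbered messages are
  computed by node 1 from (its source sequence, its private randomness, previous
  messages); even-numbered ones by node 2 likewise.\<close>
primrec messages ::
  "(nat \<Rightarrow> 'x1 list \<Rightarrow> nat \<Rightarrow> nat list \<Rightarrow> nat) \<Rightarrow> (nat \<Rightarrow> 'x2 list \<Rightarrow> nat \<Rightarrow> nat list \<Rightarrow> nat) \<Rightarrow>
   'x1 list \<Rightarrow> 'x2 list \<Rightarrow> nat \<Rightarrow> nat \<Rightarrow> nat \<Rightarrow> nat list" where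
  "messages e1 e2 xs1 xs2 m1 m2 0 = []"
| "messages e1 e2 xs1 xs2 m1 m2 (Suc k) =
     (let prev = messages e1 e2 xs1 xs2 m1 m2 k in
      prev @ [if odd (Suc k) then e1 (Suc k) xs1 m1 prev else e2 (Suc k) xs2 m2 prev])"

text \<open>Joint law of the source block and the two (independent) private randomness variables.\<close>
definition code_space :: "nat \<Rightarrow> ('x1 \<times> 'x2 \<times> 'y1 \<times> 'y2) pmf \<Rightarrow> nat pmf \<Rightarrow> nat pmf
    \<Rightarrow> (('x1 \<times> 'x2) list \<times> nat \<times> nat) pmf" where
  "code_space n q P1 P2 =
     bind_pmf (iid_pmf n (map_pmf (\<lambda>(a,b,c,d). (a,b)) q)) (\<lambda>xs.
     bind_pmf P1 (\<lambda>m1. bind_pmf P2 (\<lambda>m2. return_pmf (xs, m1, m2))))"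

definition admissible :: "nat \<Rightarrow> ('x1 \<times> 'x2 \<times> 'y1 \<times> 'y2) pmf \<Rightarrow> real \<Rightarrow> real \<Rightarrow> bool" where
  "admissible r q R12 R21 \<longleftrightarrow>
    (\<forall>\<epsilon>>0. \<exists>n0. \<forall>n\<ge>n0. \<exists>(P1::nat pmf) (P2::nat pmf)
        (e1::nat \<Rightarrow> 'x1 list \<Rightarrow> nat \<Rightarrow> nat list \<Rightarrow> nat) (e2::nat \<Rightarrow> 'x2 list \<Rightarrow> nat \<Rightarrow> nat list \<Rightarrow> nat)
        (d1::'x1 list \<Rightarrow> nat \<Rightarrow> nat list \<Rightarrow> 'y1 list) (d2::'x2 list \<Rightarrow> nat \<Rightarrow> nat list \<Rightarrow> 'y2 list).
      let J = code_space n q P1 P2;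
          C = (\<lambda>(xs, m1, m2). messages e1 e2 (map fst xs) (map snd xs) m1 m2 r);
          msg_law = (\<lambda>i. map_pmf (\<lambda>w. C w ! (i - 1)) J)
      in (\<Sum>i\<in>{i\<in>{1..r}. odd i}. entropy_pmf (msg_law i)) \<le> ennreal (real n * R12)
       \<and> (\<Sum>i\<in>{i\<in>{1..r}. even i}. entropy_pmf (msg_law i)) \<le> ennreal (real n * R21)
       \<and> tv_dist
           (map_pmf (\<lambda>(xs, m1, m2). (map fst xs, map snd xs,
                  d1 (map fst xs) m1 (C (xs, m1, m2)), d2 (map snd xs) m2 (C (xs, m1, m2)))) J)
           (map_pmf (\<lambda>zs. (map (\<lambda>(a,b,c,d). a) zs, map (\<lambda>(a,b,c,d). b) zs,
                            map (\<lambda>(a,b,c,d). c) zs, map (\<lambda>(a,b,c,d). d) zs)) (iid_pmf n q))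
         \<le> ennreal \<epsilon>)"

end

theory Submission
  imports Defs
begin

primrec plist :: "'a pmf list \<Rightarrow> 'a list pmf" where
  "plist [] = return_pmf []"
| "plist (p # ps) = bind_pmf p (\<lambda>x. map_pmf (\<lambda>xs. x # xs) (plist ps))"

lemma iid_plist: "iid_pmf n p = plist (replicate n p)"
  by (induction n) auto

lemma plist_cons_pair: "plist (p # ps) = map_pmf (\<lambda>(x,xs). x # xs) (pair_pmf p (plist ps))"
  by (simp add: pair_pmf_def map_pmf_def bind_assoc_pmf bind_return_pmf)

lemma pmf_plist: "pmf (plist ps) xs = (if length xs = length ps then prod_list (map2 pmf ps xs) else 0)"
proof (induction ps arbitrary: xs)
  case Nil
  then show ?case by (cases xs) (auto simp: pmf_return)
next
  case (Cons p ps)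
  show ?case
  proof (cases xs)
    case Nil
    have "pmf (plist (p # ps)) [] = 0"
      by (auto simp: pmf_eq_0_set_pmf)
    then show ?thesis using Nil by simp
  next
    case (Cons y ys)
    have inj: "inj (\<lambda>(x::'a,xs). x # xs)" by (auto simp: inj_def)
    have "pmf (plist (p # ps)) (y # ys) = pmf (pair_pmf p (plist ps)) (y, ys)"
      unfolding plist_cons_pair using pmf_map_inj'[OF inj, of _ "(y,ys)"] by simp
    then show ?thesis using Cons.IH[of ys] Cons by (simp add: pmf_pair)
  qed
qed

lemma set_plist: "set_pmf (plist ps) = {xs. list_all2 (\<lambda>p x. x \<in> set_pmf p) ps xs}"
proof (induction ps)
  case Nil
  then show ?case by auto
next
  case (Cons p ps)
  show ?case
    by (auto simp: Cons list_all2_Cons1)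
qed

lemma length_plist: "xs \<in> set_pmf (plist ps) \<Longrightarrow> length xs = length ps"
  by (auto simp: set_plist list_all2_lengthD)

lemma finite_set_plist:
  assumes "\<And>p. p \<in> set ps \<Longrightarrow> finite (set_pmf p)"
  shows "finite (set_pmf (plist ps))"
  using assms
proof (induction ps)
  case Nil
  then show ?case by simp
next
  case (Cons p ps)
  have "set_pmf (plist (p # ps)) = (\<lambda>(x,xs). x # xs) ` (set_pmf p \<times> set_pmf (plist ps))"
    unfolding plist_cons_pair by auto
  then show ?case using Cons by simp
qed

lemma plist_map: "plist (map (map_pmf f) ps) = map_pmf (map f) (plist ps)"
  by (induction ps) (auto simp: map_bind_pmf bind_map_pmf pmf.map_comp o_def)

lemma plist_bind:
  "plist (map2 (\<lambda>x y. bind_pmf (A x y) (B x y)) xs ys) =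
   bind_pmf (plist (map2 A xs ys)) (\<lambda>fs. plist (map2 (\<lambda>(x,y) f. B x y f) (zip xs ys) fs))"
proof (induction xs arbitrary: ys)
  case Nil
  then show ?case by (simp add: bind_return_pmf)
next
  case (Cons x xs)
  then show ?case
  proof (cases ys)
    case Nil
    then show ?thesis by (simp add: bind_return_pmf)
  next
    case (Cons y ys')
    show ?thesis unfolding Cons
      apply (simp add: Cons.IH bind_assoc_pmf bind_map_pmf map_bind_pmf bind_return_pmf)
      apply (subst bind_commute_pmf[of "plist _"])
      apply (simp add: bind_assoc_pmf bind_map_pmf map_bind_pmf bind_return_pmf)
      done
  qed
qed

lemma int_bind_fin:
  fixes f :: "'b \<Rightarrow> real"
  assumes M: "finite (set_pmf M)" and N: "\<And>x. x \<in> set_pmf M \<Longrightarrow> finite (set_pmf (N x))"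
  shows "measure_pmf.expectation (bind_pmf M N) f = measure_pmf.expectation M (\<lambda>x. measure_pmf.expectation (N x) f)"
proof -
  define A where "A = (\<Union>x\<in>set_pmf M. set_pmf (N x))"
  have A: "finite A" using M N by (auto simp: A_def)
  have pb: "pmf (bind_pmf M N) y = (\<Sum>x\<in>set_pmf M. pmf M x * pmf (N x) y)" for y
    unfolding pmf_bind by (subst integral_measure_pmf[OF M]) auto
  have "measure_pmf.expectation (bind_pmf M N) f = (\<Sum>y\<in>A. pmf (bind_pmf M N) y * f y)"
    by (subst integral_measure_pmf[OF A]) (auto simp: A_def)
  also have "\<dots> = (\<Sum>y\<in>A. \<Sum>x\<in>set_pmf M. pmf M x * (pmf (N x) y * f y))"
    by (simp add: pb sum_distrib_right mult.assoc)
  also have "\<dots> = (\<Sum>x\<in>set_pmf M. pmf M x * (\<Sum>y\<in>A. pmf (N x) y * f y))"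
    by (subst sum.swap) (simp add: sum_distrib_left)
  also have "\<dots> = measure_pmf.expectation M (\<lambda>x. measure_pmf.expectation (N x) f)"
  proof -
    have "x \<in> set_pmf M \<Longrightarrow> measure_pmf.expectation (N x) f = (\<Sum>y\<in>A. pmf (N x) y * f y)" for x
      by (subst integral_measure_pmf[OF A]) (auto simp: A_def)
    then show ?thesis
      by (subst integral_measure_pmf[OF M]) (auto intro!: sum.cong)
  qed
  finally show ?thesis .
qed

lemma finite_set_iid: "finite (set_pmf p) \<Longrightarrow> finite (set_pmf (iid_pmf n p))"
  by (induction n) auto

lemma int_cons_map:
  fixes f :: "'a list \<Rightarrow> real"
  assumes "finite (set_pmf p)"
  shows "measure_pmf.expectation (iid_pmf (Suc n) p) f =
    measure_pmf.expectation p (\<lambda>x. measure_pmf.expectation (iid_pmf n p) (\<lambda>xs. f (x # xs)))"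
  using assms by (simp add: int_bind_fin finite_set_iid)

lemma iid_sum_mean:
  fixes g :: "'a \<Rightarrow> real"
  assumes fin: "finite (set_pmf p)"
  shows "measure_pmf.expectation (iid_pmf n p) (\<lambda>zs. \<Sum>z\<leftarrow>zs. g z) = n * measure_pmf.expectation p g"
proof (induction n)
  case 0
  then show ?case by simp
next
  case (Suc n)
  have "measure_pmf.expectation (iid_pmf (Suc n) p) (\<lambda>zs. \<Sum>z\<leftarrow>zs. g z)
     = measure_pmf.expectation p (\<lambda>x. g x + n * measure_pmf.expectation p g)"
    unfolding int_cons_map[OF fin]
    using Suc fin finite_set_iid[OF fin, of n]
    by (simp add: Bochner_Integration.integral_add integrable_measure_pmf_finite)
  also have "\<dots> = (Suc n) * measure_pmf.expectation p g"
    using fin by (simp add: Bochner_Integration.integral_add integrable_measure_pmf_finite algebra_simps)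
  finally show ?case .
qed

lemma iid_sum_var:
  fixes g :: "'a \<Rightarrow> real"
  assumes fin: "finite (set_pmf p)"
  defines "m \<equiv> measure_pmf.expectation p g"
  shows "measure_pmf.expectation (iid_pmf n p) (\<lambda>zs. ((\<Sum>z\<leftarrow>zs. g z) - n * m)^2)
         = n * measure_pmf.expectation p (\<lambda>z. (g z - m)^2)"
proof (induction n)
  case 0
  then show ?case by simp
next
  case (Suc n)
  let ?E = "measure_pmf.expectation (iid_pmf n p)"
  let ?V = "measure_pmf.expectation p (\<lambda>z. (g z - m)^2)"
  have fi: "finite (set_pmf (iid_pmf n p))" using finite_set_iid[OF fin] .
  have mean0: "?E (\<lambda>zs. (\<Sum>z\<leftarrow>zs. g z) - n * m) = 0"
    using iid_sum_mean[OF fin, of n g] fi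
    by (simp add: Bochner_Integration.integral_diff integrable_measure_pmf_finite m_def)
  have inner: "?E (\<lambda>xs. ((\<Sum>z\<leftarrow>x#xs. g z) - real (Suc n) * m)^2) = (g x - m)^2 + n * ?V" for x
  proof -
    have eq: "((\<Sum>z\<leftarrow>x#xs. g z) - real (Suc n) * m)^2 =
        (g x - m)^2 + 2 * (g x - m) * ((\<Sum>z\<leftarrow>xs. g z) - n * m) + ((\<Sum>z\<leftarrow>xs. g z) - n * m)^2" for xs
      by (simp add: power2_eq_square algebra_simps)
    show ?thesis
      unfolding eq using fi mean0 Suc
      by (simp add: Bochner_Integration.integral_add integrable_measure_pmf_finite)
  qed
  have "measure_pmf.expectation (iid_pmf (Suc n) p) (\<lambda>zs. ((\<Sum>z\<leftarrow>zs. g z) - real (Suc n) * m)^2)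
     = measure_pmf.expectation p (\<lambda>x. (g x - m)^2 + n * ?V)"
    unfolding int_cons_map[OF fin] inner ..
  also have "\<dots> = Suc n * ?V"
    using fin by (simp add: Bochner_Integration.integral_add integrable_measure_pmf_finite algebra_simps)
  finally show ?case .
qed

lemma chebyshev_pmf:
  fixes Z :: "'a \<Rightarrow> real"
  assumes fin: "finite (set_pmf M)" and c: "c > 0"
  shows "measure_pmf.prob M {x. Z x \<ge> c} \<le> measure_pmf.expectation M (\<lambda>x. (Z x)^2) / c^2"
proof -
  have "measure_pmf.prob M {x. Z x \<ge> c} = measure_pmf.expectation M (indicator {x. Z x \<ge> c})"
    by simp
  also have "\<dots> \<le> measure_pmf.expectation M (\<lambda>x. (Z x)^2 / c^2)"
  proof (rule integral_mono)
    show "integrable (measure_pmf M) (indicat_real {x. c \<le> Z x})"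
      using fin by (simp add: integrable_measure_pmf_finite)
    show "integrable (measure_pmf M) (\<lambda>x. (Z x)\<^sup>2 / c\<^sup>2)"
      using fin by (simp add: integrable_measure_pmf_finite)
    fix x show "indicat_real {x. c \<le> Z x} x \<le> (Z x)\<^sup>2 / c\<^sup>2"
    proof (cases "c \<le> Z x")
      case True
      then have "c^2 \<le> (Z x)^2" using c by (intro power_mono) auto
      then show ?thesis using True c by (simp add: field_simps)
    qed simp
  qed
  also have "\<dots> = measure_pmf.expectation M (\<lambda>x. (Z x)^2) / c^2" by simp
  finally show ?thesis .
qed

lemma iid_lln:
  fixes g :: "'a \<Rightarrow> real"
  assumes fin: "finite (set_pmf p)" and d: "d > 0" and n: "n > 0"
  defines "m \<equiv> measure_pmf.expectation p g"
  shows "measure_pmf.prob (iid_pmf n p) {zs. (\<Sum>z\<leftarrow>zs. g z) \<ge> n * (m + d)}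
     \<le> measure_pmf.expectation p (\<lambda>z. (g z - m)^2) / (n * d^2)"
proof -
  have "measure_pmf.prob (iid_pmf n p) {zs. (\<Sum>z\<leftarrow>zs. g z) \<ge> n * (m + d)}
     = measure_pmf.prob (iid_pmf n p) {zs. (\<Sum>z\<leftarrow>zs. g z) - n * m \<ge> n * d}"
    by (simp add: algebra_simps)
  also have "\<dots> \<le> measure_pmf.expectation (iid_pmf n p) (\<lambda>zs. ((\<Sum>z\<leftarrow>zs. g z) - n * m)^2) / (n*d)^2"
    using chebyshev_pmf[OF finite_set_iid[OF fin], of "n*d"] d n by simp
  also have "\<dots> = measure_pmf.expectation p (\<lambda>z. (g z - m)^2) / (n * d^2)"
    unfolding iid_sum_var[OF fin, where g=g and n=n, folded m_def] using n d by (simp add: power2_eq_square field_simps)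
  finally show ?thesis .
qed

lemma abs_le_sqrt_sq:
  fixes X :: "'a \<Rightarrow> real"
  assumes fin: "finite (set_pmf M)"
  shows "measure_pmf.expectation M (\<lambda>x. \<bar>X x\<bar>) \<le> sqrt (measure_pmf.expectation M (\<lambda>x. (X x)^2))"
proof -
  let ?c = "measure_pmf.expectation M (\<lambda>x. \<bar>X x\<bar>)"
  have "0 \<le> measure_pmf.expectation M (\<lambda>x. (\<bar>X x\<bar> - ?c)^2)" by simp
  also have "\<dots> = measure_pmf.expectation M (\<lambda>x. (X x)^2) - ?c^2"
  proof -
    have eq: "(\<bar>X x\<bar> - ?c)^2 = (X x)^2 - 2 * ?c * \<bar>X x\<bar> + ?c^2" for x
      by (simp add: power2_eq_square algebra_simps)
    show ?thesis unfolding eq using fin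
      by (simp add: Bochner_Integration.integral_add Bochner_Integration.integral_diff
          integrable_measure_pmf_finite power2_eq_square)
  qed
  finally have "?c^2 \<le> measure_pmf.expectation M (\<lambda>x. (X x)^2)" by simp
  then show ?thesis using real_le_rsqrt by blast
qed

lemma avg_dev_bound:
  fixes T U :: "'a \<Rightarrow> real"
  assumes fin: "finite (set_pmf \<mu>)" and K: "K > 0"
    and T0: "\<And>a. 0 \<le> T a" and Tc: "\<And>a. T a \<le> c" and U0: "\<And>a. 0 \<le> U a"
  shows "measure_pmf.expectation (iid_pmf K \<mu>)
      (\<lambda>cb. \<bar>(\<Sum>z\<leftarrow>cb. T z + U z) / K - (measure_pmf.expectation \<mu> T + measure_pmf.expectation \<mu> U)\<bar>)
    \<le> sqrt (c * measure_pmf.expectation \<mu> T / K) + 2 * measure_pmf.expectation \<mu> U"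
proof -
  let ?E = "measure_pmf.expectation (iid_pmf K \<mu>)"
  let ?e = "measure_pmf.expectation \<mu>"
  have fi: "finite (set_pmf (iid_pmf K \<mu>))" using finite_set_iid[OF fin] .
  have pw: "\<bar>(\<Sum>z\<leftarrow>cb. T z + U z) / K - (?e T + ?e U)\<bar>
      \<le> \<bar>(\<Sum>z\<leftarrow>cb. T z) / K - ?e T\<bar> + (\<Sum>z\<leftarrow>cb. U z) / K + ?e U" for cb
  proof -
    have s: "(\<Sum>z\<leftarrow>cb. T z + U z) = (\<Sum>z\<leftarrow>cb. T z) + (\<Sum>z\<leftarrow>cb. U z)"
      by (simp add: sum_list_addf)
    have "0 \<le> (\<Sum>z\<leftarrow>cb. U z)" using U0 by (induction cb) auto
    moreover have "0 \<le> ?e U" using U0 by simp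
    moreover have "0 \<le> (\<Sum>z\<leftarrow>cb. U z) / K" using \<open>0 \<le> (\<Sum>z\<leftarrow>cb. U z)\<close> by simp
    moreover have "((\<Sum>z\<leftarrow>cb. T z) + (\<Sum>z\<leftarrow>cb. U z)) / K - (?e T + ?e U)
       = ((\<Sum>z\<leftarrow>cb. T z) / K - ?e T) + (\<Sum>z\<leftarrow>cb. U z) / K - ?e U"
      by (simp add: add_divide_distrib)
    ultimately show ?thesis unfolding s by linarith
  qed
  have "?E (\<lambda>cb. \<bar>(\<Sum>z\<leftarrow>cb. T z + U z) / K - (?e T + ?e U)\<bar>)
      \<le> ?E (\<lambda>cb. \<bar>(\<Sum>z\<leftarrow>cb. T z) / K - ?e T\<bar> + (\<Sum>z\<leftarrow>cb. U z) / K + ?e U)"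
    by (rule integral_mono) (use fi pw in \<open>auto simp: integrable_measure_pmf_finite\<close>)
  also have "\<dots> = ?E (\<lambda>cb. \<bar>(\<Sum>z\<leftarrow>cb. T z) / K - ?e T\<bar>) + 2 * ?e U"
    using fi iid_sum_mean[OF fin, of K U] K
    by (simp add: Bochner_Integration.integral_add integrable_measure_pmf_finite)
  also have "?E (\<lambda>cb. \<bar>(\<Sum>z\<leftarrow>cb. T z) / K - ?e T\<bar>) \<le> sqrt (c * ?e T / K)"
  proof -
    have "?E (\<lambda>cb. \<bar>(\<Sum>z\<leftarrow>cb. T z) / K - ?e T\<bar>) \<le> sqrt (?E (\<lambda>cb. ((\<Sum>z\<leftarrow>cb. T z) / K - ?e T)^2))"
      by (rule abs_le_sqrt_sq[OF fi])
    also have "?E (\<lambda>cb. ((\<Sum>z\<leftarrow>cb. T z) / K - ?e T)^2) = ?E (\<lambda>cb. ((\<Sum>z\<leftarrow>cb. T z) - K * ?e T)^2) / K^2"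
    proof -
      have "((\<Sum>z\<leftarrow>cb. T z) / K - ?e T)^2 = ((\<Sum>z\<leftarrow>cb. T z) - K * ?e T)^2 / K^2" for cb
        using K by (simp add: power_divide[symmetric] diff_divide_distrib)
      then show ?thesis by simp
    qed
    also have "\<dots> = K * ?e (\<lambda>z. (T z - ?e T)^2) / K^2"
      using iid_sum_var[OF fin, where g=T and n=K] by simp
    also have "\<dots> = ?e (\<lambda>z. (T z - ?e T)^2) / K"
      using K by (simp add: power2_eq_square)
    also have "?e (\<lambda>z. (T z - ?e T)^2) \<le> c * ?e T"
    proof -
      have "?e (\<lambda>z. (T z - ?e T)^2) = ?e (\<lambda>z. (T z)^2) - (?e T)^2"
      proof -
        have eq: "(T z - ?e T)^2 = (T z)^2 - 2 * ?e T * T z + (?e T)^2" for z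
          by (simp add: power2_eq_square algebra_simps)
        show ?thesis unfolding eq using fin
          by (simp add: Bochner_Integration.integral_add Bochner_Integration.integral_diff
              integrable_measure_pmf_finite power2_eq_square)
      qed
      also have "\<dots> \<le> ?e (\<lambda>z. (T z)^2)" by simp
      also have "\<dots> \<le> ?e (\<lambda>z. c * T z)"
        apply (rule integral_mono)
        using fin apply (simp_all add: integrable_measure_pmf_finite)
        using T0 Tc by (simp add: power2_eq_square mult_right_mono)
      also have "\<dots> = c * ?e T" by simp
      finally show ?thesis .
    qed
    then have "?e (\<lambda>z. (T z - ?e T)^2) / K \<le> c * ?e T / K"
      using K by (simp add: divide_right_mono)
    then have "sqrt (?e (\<lambda>z. (T z - ?e T)^2) / K) \<le> sqrt (c * ?e T / K)"
      by simp
    finally show ?thesis by simp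
  qed
  finally show ?thesis by simp
qed



lemma sum_sqrt_le:
  fixes x y :: "'b \<Rightarrow> real"
  assumes "\<And>b. b \<in> B \<Longrightarrow> 0 \<le> x b" "\<And>b. b \<in> B \<Longrightarrow> 0 \<le> y b"
    "sum x B \<le> 1" "sum y B \<le> 1"
  shows "(\<Sum>b\<in>B. sqrt (x b * y b)) \<le> 1"
proof -
  have "(\<Sum>b\<in>B. sqrt (x b) * sqrt (y b))^2 \<le> (\<Sum>b\<in>B. (sqrt (x b))^2) * (\<Sum>b\<in>B. (sqrt (y b))^2)"
    by (rule Cauchy_Schwarz_ineq_sum)
  also have "\<dots> = sum x B * sum y B" using assms(1,2) by simp
  also have "\<dots> \<le> 1" using assms by (simp add: mult_le_one sum_nonneg)
  finally have sq1: "(\<Sum>b\<in>B. sqrt (x b) * sqrt (y b))^2 \<le> 1" .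
  then have "(\<Sum>b\<in>B. sqrt (x b) * sqrt (y b)) \<le> 1"
  proof -
    have "\<bar>\<Sum>b\<in>B. sqrt (x b) * sqrt (y b)\<bar> \<le> 1" using sq1 by (simp only: abs_square_le_1)
    then show ?thesis by (rule abs_le_D1)
  qed
  then show ?thesis by (simp add: real_sqrt_mult)
qed

lemma soft_cover:
  fixes \<mu> :: "'a pmf" and Wc :: "'a \<Rightarrow> 'b pmf"
  assumes fin: "finite (set_pmf \<mu>)" and finW: "\<And>a. a \<in> set_pmf \<mu> \<Longrightarrow> finite (set_pmf (Wc a))"
    and K: "K > 0" and t: "t > 0"
  defines "Q \<equiv> bind_pmf \<mu> Wc"
  defines "B \<equiv> (\<Union>a\<in>set_pmf \<mu>. set_pmf (Wc a))"
  shows "measure_pmf.expectation (iid_pmf K \<mu>)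
      (\<lambda>cb. \<Sum>b\<in>B. \<bar>pmf (bind_pmf (pmf_of_set {..<K}) (\<lambda>k. Wc (cb ! k))) b - pmf Q b\<bar>)
    \<le> sqrt (t / K) + 2 * measure_pmf.expectation \<mu>
        (\<lambda>a. \<Sum>b\<in>B. if pmf (Wc a) b > t * pmf Q b then pmf (Wc a) b else 0)"
proof -
  let ?E = "measure_pmf.expectation (iid_pmf K \<mu>)"
  let ?e = "measure_pmf.expectation \<mu>"
  define T where "T b a = (if pmf (Wc a) b > t * pmf Q b then 0 else pmf (Wc a) b)" for b a
  define U where "U b a = (if pmf (Wc a) b > t * pmf Q b then pmf (Wc a) b else 0)" for b a
  have finB: "finite B" using fin finW by (auto simp: B_def)
  have fi: "finite (set_pmf (iid_pmf K \<mu>))" using finite_set_iid[OF fin] .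
  have TU: "T b a + U b a = pmf (Wc a) b" for a b by (simp add: T_def U_def)
  have Qb: "pmf Q b = ?e (T b) + ?e (U b)" for b
  proof -
    have "pmf Q b = ?e (\<lambda>a. pmf (Wc a) b)" unfolding Q_def pmf_bind ..
    also have "\<dots> = ?e (\<lambda>a. T b a + U b a)" by (simp add: TU)
    also have "\<dots> = ?e (T b) + ?e (U b)"
      using fin by (simp add: Bochner_Integration.integral_add integrable_measure_pmf_finite)
    finally show ?thesis .
  qed
  have D: "pmf (bind_pmf (pmf_of_set {..<K}) (\<lambda>k. Wc (cb ! k))) b = (\<Sum>z\<leftarrow>cb. T b z + U b z) / K"
    if "cb \<in> set_pmf (iid_pmf K \<mu>)" for cb b
  proof -
    have len: "length cb = K" using that by (simp add: iid_plist length_plist)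
    have "pmf (bind_pmf (pmf_of_set {..<K}) (\<lambda>k. Wc (cb ! k))) b = (\<Sum>k<K. pmf (Wc (cb ! k)) b) / K"
      unfolding pmf_bind using K by (subst integral_pmf_of_set) auto
    also have "(\<Sum>k<K. pmf (Wc (cb ! k)) b) = (\<Sum>z\<leftarrow>cb. pmf (Wc z) b)"
      using len by (simp add: sum_list_sum_nth atLeast0LessThan)
    finally show ?thesis by (simp add: TU)
  qed
  have T0: "0 \<le> T b a" for a b by (simp add: T_def)
  have Tc: "T b a \<le> t * pmf Q b" for a b using t by (simp add: T_def)
  have U0: "0 \<le> U b a" for a b by (simp add: U_def)
  have "?E (\<lambda>cb. \<Sum>b\<in>B. \<bar>pmf (bind_pmf (pmf_of_set {..<K}) (\<lambda>k. Wc (cb ! k))) b - pmf Q b\<bar>)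
      = ?E (\<lambda>cb. \<Sum>b\<in>B. \<bar>(\<Sum>z\<leftarrow>cb. T b z + U b z) / K - (?e (T b) + ?e (U b))\<bar>)"
  proof (rule integral_cong_AE)
    show "AE cb in iid_pmf K \<mu>. (\<Sum>b\<in>B. \<bar>pmf (bind_pmf (pmf_of_set {..<K}) (\<lambda>k. Wc (cb ! k))) b - pmf Q b\<bar>)
       = (\<Sum>b\<in>B. \<bar>(\<Sum>z\<leftarrow>cb. T b z + U b z) / K - (?e (T b) + ?e (U b))\<bar>)"
      unfolding AE_measure_pmf_iff
    proof
      fix cb assume cb: "cb \<in> set_pmf (iid_pmf K \<mu>)"
      show "(\<Sum>b\<in>B. \<bar>pmf (bind_pmf (pmf_of_set {..<K}) (\<lambda>k. Wc (cb ! k))) b - pmf Q b\<bar>)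
       = (\<Sum>b\<in>B. \<bar>(\<Sum>z\<leftarrow>cb. T b z + U b z) / K - (?e (T b) + ?e (U b))\<bar>)"
        by (rule sum.cong[OF refl]) (simp only: D[OF cb] Qb)
    qed
  qed simp_all
  also have "\<dots> = (\<Sum>b\<in>B. ?E (\<lambda>cb. \<bar>(\<Sum>z\<leftarrow>cb. T b z + U b z) / K - (?e (T b) + ?e (U b))\<bar>))"
    by (subst Bochner_Integration.integral_sum) (auto simp: integrable_measure_pmf_finite fi)
  also have "\<dots> \<le> (\<Sum>b\<in>B. sqrt (t * pmf Q b * ?e (T b) / K) + 2 * ?e (U b))"
    by (rule sum_mono) (rule avg_dev_bound[OF fin K T0 Tc U0])
  also have "\<dots> = sqrt (t / K) * (\<Sum>b\<in>B. sqrt (pmf Q b * ?e (T b))) + 2 * (\<Sum>b\<in>B. ?e (U b))"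
  proof -
    have "sqrt (t * pmf Q b * ?e (T b) / K) = sqrt (t / K) * sqrt (pmf Q b * ?e (T b))" for b
      by (simp add: real_sqrt_mult[symmetric])
    then show ?thesis by (simp add: sum.distrib sum_distrib_left)
  qed
  finally have main: "?E (\<lambda>cb. \<Sum>b\<in>B. \<bar>pmf (bind_pmf (pmf_of_set {..<K}) (\<lambda>k. Wc (cb ! k))) b - pmf Q b\<bar>)
     \<le> sqrt (t / K) * (\<Sum>b\<in>B. sqrt (pmf Q b * ?e (T b))) + 2 * (\<Sum>b\<in>B. ?e (U b))" .
  have S1: "(\<Sum>b\<in>B. sqrt (pmf Q b * ?e (T b))) \<le> 1"
  proof (rule sum_sqrt_le)
    show "sum (pmf Q) B \<le> 1"
      using sum_pmf_eq_1[OF finB, of Q] by (simp add: B_def Q_def)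
    have "sum (\<lambda>b. ?e (T b)) B \<le> sum (pmf Q) B"
      by (rule sum_mono) (simp add: Qb U0)
    then show "sum (\<lambda>b. ?e (T b)) B \<le> 1" using \<open>sum (pmf Q) B \<le> 1\<close> by linarith
  qed (auto simp: T0)
  have S2: "(\<Sum>b\<in>B. ?e (U b)) = ?e (\<lambda>a. \<Sum>b\<in>B. U b a)"
    by (rule Bochner_Integration.integral_sum[symmetric]) (simp add: integrable_measure_pmf_finite fin)
  have "sqrt (t / K) * (\<Sum>b\<in>B. sqrt (pmf Q b * ?e (T b))) \<le> sqrt (t / K)"
    using S1 t K by (simp add: mult_left_le)
  then show ?thesis using main S2 by (simp add: U_def)
qed

lemma plist_bind_dep:
  "plist (map (\<lambda>x. bind_pmf (A x) (B x)) xs) = bind_pmf (plist (map A xs)) (\<lambda>fs. plist (map2 B xs fs))"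
proof (induction xs)
  case Nil
  then show ?case by (simp add: bind_return_pmf)
next
  case (Cons x xs)
  show ?case
    apply (simp add: Cons.IH bind_assoc_pmf bind_map_pmf map_bind_pmf bind_return_pmf)
    apply (subst bind_commute_pmf[of "plist _"])
    apply (simp add: bind_assoc_pmf bind_map_pmf map_bind_pmf bind_return_pmf)
    done
qed

lemma plist_map2_map:
  "length xs = length fs \<Longrightarrow>
   plist (map2 (\<lambda>x f. map_pmf (h x f) (W x f)) xs fs) = map_pmf (\<lambda>ws. map2 (\<lambda>(x,f) w. h x f w) (zip xs fs) ws) (plist (map2 W xs fs))"
proof (induction xs arbitrary: fs)
  case Nil
  then show ?case by simp
next
  case (Cons x xs)
  then obtain f fs' where fs: "fs = f # fs'" by (cases fs) auto
  show ?case using Cons fs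
    by (simp add: map_bind_pmf bind_map_pmf pmf.map_comp o_def)
qed

lemma map2_triple_zip: "map2 (\<lambda>(x,f) w. (x,f,w)) (zip xs fs) ws = zip xs (zip fs ws)"
  by (induction xs arbitrary: fs ws) (auto simp: zip_Cons1 split: list.splits)

lemma pmf_eq_bind_cong:
  "(\<And>x. x \<in> set_pmf M \<Longrightarrow> f x = g x) \<Longrightarrow> bind_pmf M f = bind_pmf M g"
  by (rule bind_pmf_cong) auto

lemma iid_bind: "iid_pmf n (bind_pmf p C) = bind_pmf (iid_pmf n p) (\<lambda>xs. plist (map C xs))"
proof -
  have "iid_pmf n (bind_pmf p C) = plist (map (\<lambda>_. bind_pmf p C) (replicate n ()))"
    by (simp add: iid_plist map_replicate_const)
  also have "\<dots> = bind_pmf (plist (map (\<lambda>_. p) (replicate n ()))) (\<lambda>fs. plist (map2 (\<lambda>_. C) (replicate n ()) fs))"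
    by (rule plist_bind_dep)
  also have "\<dots> = bind_pmf (iid_pmf n p) (\<lambda>xs. plist (map C xs))"
  proof -
    have "map2 (\<lambda>_. C) (replicate n ()) fs = map C fs" if "length fs = n" for fs
      using that by (induction fs arbitrary: n) (auto simp: Suc_length_conv)
    then show ?thesis
      by (simp add: iid_plist map_replicate_const) (rule pmf_eq_bind_cong, simp add: length_plist)
  qed
  finally show ?thesis .
qed

definition Wn :: "('x \<Rightarrow> 'v \<Rightarrow> 'w pmf) \<Rightarrow> 'x list \<Rightarrow> 'v list \<Rightarrow> 'w list pmf" where
  "Wn W xs fs = plist (map2 W xs fs)"

definition joint3 :: "'x pmf \<Rightarrow> ('x \<Rightarrow> 'v pmf) \<Rightarrow> ('x \<Rightarrow> 'v \<Rightarrow> 'w pmf) \<Rightarrow> ('x \<times> 'v \<times> 'w) pmf" where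
  "joint3 px \<kappa> W = bind_pmf px (\<lambda>x. bind_pmf (\<kappa> x) (\<lambda>f. map_pmf (\<lambda>w. (x,f,w)) (W x f)))"

lemma iid_joint3:
  "iid_pmf n (joint3 px \<kappa> W) = bind_pmf (iid_pmf n px) (\<lambda>xs. bind_pmf (plist (map \<kappa> xs))
      (\<lambda>fs. map_pmf (\<lambda>ws. zip xs (zip fs ws)) (Wn W xs fs)))"
proof -
  have "iid_pmf n (joint3 px \<kappa> W) = bind_pmf (iid_pmf n px)
     (\<lambda>xs. plist (map (\<lambda>x. bind_pmf (\<kappa> x) (\<lambda>f. map_pmf (\<lambda>w. (x,f,w)) (W x f))) xs))"
    unfolding joint3_def by (rule iid_bind)
  also have "\<dots> = bind_pmf (iid_pmf n px) (\<lambda>xs. bind_pmf (plist (map \<kappa> xs))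
      (\<lambda>fs. map_pmf (\<lambda>ws. zip xs (zip fs ws)) (Wn W xs fs)))"
  proof (rule pmf_eq_bind_cong)
    fix xs
    show "plist (map (\<lambda>x. bind_pmf (\<kappa> x) (\<lambda>f. map_pmf (\<lambda>w. (x,f,w)) (W x f))) xs) =
      bind_pmf (plist (map \<kappa> xs)) (\<lambda>fs. map_pmf (\<lambda>ws. zip xs (zip fs ws)) (Wn W xs fs))"
      unfolding plist_bind_dep
    proof (rule pmf_eq_bind_cong)
      fix fs assume "fs \<in> set_pmf (plist (map \<kappa> xs))"
      then have len: "length xs = length fs" using length_plist by fastforce
      show "plist (map2 (\<lambda>x f. map_pmf (\<lambda>w. (x,f,w)) (W x f)) xs fs) = map_pmf (\<lambda>ws. zip xs (zip fs ws)) (Wn W xs fs)"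
        unfolding plist_map2_map[OF len] Wn_def map2_triple_zip by simp
    qed
  qed
  finally show ?thesis .
qed

lemma bind_Wn: "bind_pmf (plist (map \<kappa> xs)) (Wn W xs) = plist (map (\<lambda>x. bind_pmf (\<kappa> x) (W x)) xs)"
  unfolding plist_bind_dep Wn_def ..

lemma tv_fin:
  assumes S: "finite S" "set_pmf A \<subseteq> S" "set_pmf B \<subseteq> S"
  shows "tv_dist A B = ennreal (\<Sum>z\<in>S. \<bar>pmf A z - pmf B z\<bar>)"
proof -
  have "tv_dist A B = (\<integral>\<^sup>+ x. ennreal \<bar>pmf A x - pmf B x\<bar> * indicator S x \<partial>count_space UNIV)"
    unfolding tv_dist_def
  proof (intro nn_integral_cong)
    fix x show "ennreal \<bar>pmf A x - pmf B x\<bar> = ennreal \<bar>pmf A x - pmf B x\<bar> * indicator S x"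
    proof (cases "x \<in> S")
      case False
      then have "pmf A x = 0" "pmf B x = 0" using S by (auto simp: set_pmf_eq)
      then show ?thesis by simp
    qed simp
  qed
  also have "\<dots> = (\<Sum>z\<in>S. ennreal \<bar>pmf A z - pmf B z\<bar>)"
    by (simp add: nn_integral_count_space_indicator[symmetric] nn_integral_count_space_finite S)
  also have "\<dots> = ennreal (\<Sum>z\<in>S. \<bar>pmf A z - pmf B z\<bar>)"
    by (rule sum_ennreal) simp
  finally show ?thesis .
qed

lemma pmf_map_fin:
  assumes "finite S" "set_pmf A \<subseteq> S"
  shows "pmf (map_pmf \<phi> A) y = (\<Sum>z\<in>{z\<in>S. \<phi> z = y}. pmf A z)"
proof -
  have "pmf (map_pmf \<phi> A) y = measure_pmf.prob A (\<phi> -` {y})" by (rule pmf_map)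
  also have "\<dots> = measure_pmf.prob A {z\<in>S. \<phi> z = y}"
    using assms by (intro measure_eq_AE) (auto simp: AE_measure_pmf_iff)
  also have "\<dots> = (\<Sum>z\<in>{z\<in>S. \<phi> z = y}. pmf A z)"
    using assms by (subst measure_measure_pmf_finite) auto
  finally show ?thesis .
qed

lemma tv_map_le:
  assumes fA: "finite (set_pmf A)" and fB: "finite (set_pmf B)"
  shows "tv_dist (map_pmf \<phi> A) (map_pmf \<phi> B) \<le> tv_dist A B"
proof -
  define S where "S = set_pmf A \<union> set_pmf B"
  have S: "finite S" "set_pmf A \<subseteq> S" "set_pmf B \<subseteq> S" using fA fB by (auto simp: S_def)
  have "tv_dist (map_pmf \<phi> A) (map_pmf \<phi> B) = ennreal (\<Sum>y\<in>\<phi> ` S. \<bar>pmf (map_pmf \<phi> A) y - pmf (map_pmf \<phi> B) y\<bar>)"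
    by (rule tv_fin) (use S in auto)
  also have "(\<Sum>y\<in>\<phi> ` S. \<bar>pmf (map_pmf \<phi> A) y - pmf (map_pmf \<phi> B) y\<bar>)
      = (\<Sum>y\<in>\<phi> ` S. \<bar>\<Sum>z\<in>{z\<in>S. \<phi> z = y}. pmf A z - pmf B z\<bar>)"
    by (simp add: pmf_map_fin[OF S(1,2)] pmf_map_fin[OF S(1,3)] sum_subtractf)
  also have "\<dots> \<le> (\<Sum>y\<in>\<phi> ` S. \<Sum>z\<in>{z\<in>S. \<phi> z = y}. \<bar>pmf A z - pmf B z\<bar>)"
    by (intro sum_mono sum_abs)
  also have "\<dots> = (\<Sum>z\<in>S. \<bar>pmf A z - pmf B z\<bar>)"
    by (rule sum.image_gen[symmetric]) (rule S)
  finally have "tv_dist (map_pmf \<phi> A) (map_pmf \<phi> B) \<le> ennreal (\<Sum>z\<in>S. \<bar>pmf A z - pmf B z\<bar>)"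
    by (simp add: ennreal_leI)
  also have "\<dots> = tv_dist A B" by (rule tv_fin[symmetric]) (use S in auto)
  finally show ?thesis .
qed

lemma pmf_bind_pair:
  "pmf (bind_pmf M (\<lambda>x. map_pmf (Pair x) (D x))) (x, w) = pmf M x * pmf (D x) w"
proof -
  have f: "pmf (map_pmf (Pair x') (D x')) (x, w) = (if x' = x then pmf (D x) w else 0)" for x'
  proof (cases "x' = x")
    case True
    then show ?thesis using pmf_map_inj'[of "Pair x" "D x" w] by (simp add: inj_def)
  next
    case False
    then show ?thesis by (auto simp: pmf_eq_0_set_pmf)
  qed
  show ?thesis unfolding pmf_bind f
    by (subst integral_measure_pmf[of "{x}"]) (auto split: if_splits)
qed

lemma tv_bind_pair:
  assumes fM: "finite (set_pmf M)"
    and Sx: "\<And>x. x \<in> set_pmf M \<Longrightarrow> finite (Sx x) \<and> set_pmf (D x) \<subseteq> Sx x \<and> set_pmf (E x) \<subseteq> Sx x"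
  shows "tv_dist (bind_pmf M (\<lambda>x. map_pmf (Pair x) (D x))) (bind_pmf M (\<lambda>x. map_pmf (Pair x) (E x)))
       = ennreal (\<Sum>x\<in>set_pmf M. pmf M x * (\<Sum>w\<in>Sx x. \<bar>pmf (D x) w - pmf (E x) w\<bar>))"
proof -
  define S where "S = Sigma (set_pmf M) Sx"
  have fS: "finite S" using fM Sx by (auto simp: S_def)
  have "tv_dist (bind_pmf M (\<lambda>x. map_pmf (Pair x) (D x))) (bind_pmf M (\<lambda>x. map_pmf (Pair x) (E x)))
     = ennreal (\<Sum>z\<in>S. \<bar>pmf (bind_pmf M (\<lambda>x. map_pmf (Pair x) (D x))) z - pmf (bind_pmf M (\<lambda>x. map_pmf (Pair x) (E x))) z\<bar>)"
    by (rule tv_fin) (use fS Sx in \<open>auto simp: S_def\<close>)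
  also have "(\<Sum>z\<in>S. \<bar>pmf (bind_pmf M (\<lambda>x. map_pmf (Pair x) (D x))) z - pmf (bind_pmf M (\<lambda>x. map_pmf (Pair x) (E x))) z\<bar>)
     = (\<Sum>x\<in>set_pmf M. pmf M x * (\<Sum>w\<in>Sx x. \<bar>pmf (D x) w - pmf (E x) w\<bar>))"
  proof -
    have fx: "\<forall>x\<in>set_pmf M. finite (Sx x)" using Sx by blast
    show ?thesis
    unfolding S_def sum.Sigma[symmetric, OF fM fx, where g="\<lambda>x w. \<bar>pmf (bind_pmf M (\<lambda>x. map_pmf (Pair x) (D x))) (x,w) - pmf (bind_pmf M (\<lambda>x. map_pmf (Pair x) (E x))) (x,w)\<bar>", simplified]
    by (simp add: pmf_bind_pair sum_distrib_left abs_mult right_diff_distrib[symmetric])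
  qed
  finally show ?thesis .
qed

lemma exists_le_expectation:
  fixes f :: "'a \<Rightarrow> real"
  assumes "finite (set_pmf M)" "measure_pmf.expectation M f \<le> c"
  shows "\<exists>x\<in>set_pmf M. f x \<le> c"
proof (rule ccontr)
  assume "\<not> ?thesis"
  then have lt: "\<And>x. x \<in> set_pmf M \<Longrightarrow> c < f x" by auto
  have "measure_pmf.expectation M f = (\<Sum>x\<in>set_pmf M. pmf M x * f x)"
    using assms(1) by (subst integral_measure_pmf[OF assms(1)]) auto
  also have "\<dots> > (\<Sum>x\<in>set_pmf M. pmf M x * c)"
  proof (rule sum_strict_mono_ex1)
    show "finite (set_pmf M)" by fact
    show "\<forall>x\<in>set_pmf M. pmf M x * c \<le> pmf M x * f x" using lt by (metis less_imp_le mult_left_mono pmf_nonneg)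
    obtain x where "x \<in> set_pmf M" using set_pmf_not_empty[of M] by blast
    then show "\<exists>x\<in>set_pmf M. pmf M x * c < pmf M x * f x" using lt by (auto simp: pmf_positive)
  qed
  also have "(\<Sum>x\<in>set_pmf M. pmf M x * c) = c"
    using sum_pmf_eq_1[OF assms(1) order_refl] by (simp add: sum_distrib_right[symmetric])
  finally show False using assms(2) by simp
qed

lemma prod_ratio_log:
  fixes a b :: "nat \<Rightarrow> real"
  assumes A: "finite A" and pos: "\<And>i. i \<in> A \<Longrightarrow> a i > 0 \<and> b i > 0" and t: "t > 0"
    and gt: "prod a A > t * prod b A"
  shows "(\<Sum>i\<in>A. log 2 (a i / b i)) > log 2 t"
proof -
  have pb: "prod b A > 0" using pos by (simp add: prod_pos)
  have "prod (\<lambda>i. a i / b i) A = prod a A / prod b A" by (rule prod_dividef)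
  also have "\<dots> > t" using gt pb by (simp add: field_simps)
  finally have tl: "t < prod (\<lambda>i. a i / b i) A" .
  have "log 2 t < log 2 (prod (\<lambda>i. a i / b i) A)"
    using tl t by simp
  also have "log 2 (prod (\<lambda>i. a i / b i) A) = (\<Sum>i\<in>A. log 2 (a i / b i))"
  proof -
    have "ln (prod (\<lambda>i. a i / b i) A) = (\<Sum>i\<in>A. ln (a i / b i))"
      using ln_prod[OF A, of "\<lambda>i. a i / b i"] pos by force
    then show ?thesis unfolding log_def by (simp add: sum_divide_distrib)
  qed
  finally show ?thesis .
qed

lemma prod_list_prod_nth: "prod_list xs = (\<Prod>i = 0..<length xs. xs ! i)"
  by (induction xs) (simp_all add: atLeast0LessThan prod.lessThan_Suc_shift del: prod.lessThan_Suc)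

lemma set_plist_nth:
  assumes "xs \<in> set_pmf (plist ps)" "i < length ps"
  shows "xs ! i \<in> set_pmf (ps ! i)"
  using assms by (auto simp: set_plist list_all2_conv_all_nth)

lemma key_pointwise:
  fixes \<kappa> :: "'x \<Rightarrow> 'v pmf" and W :: "'x \<Rightarrow> 'v \<Rightarrow> 'w pmf"
  assumes fs: "fs \<in> set_pmf (plist (map \<kappa> xs))" and ws: "ws \<in> set_pmf (Wn W xs fs)"
    and t: "t > 0"
    and gt: "pmf (Wn W xs fs) ws > t * pmf (plist (map (\<lambda>x. bind_pmf (\<kappa> x) (W x)) xs)) ws"
  shows "(\<Sum>z\<leftarrow>zip xs (zip fs ws). (case z of (x, f, w) \<Rightarrow>
            log 2 (pmf (W x f) w / pmf (bind_pmf (\<kappa> x) (W x)) w))) > log 2 t"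
proof -
  define n where "n = length xs"
  have lf: "length fs = n" using length_plist[OF fs] by (simp add: n_def)
  have lw: "length ws = n" using length_plist[OF ws[unfolded Wn_def]] lf by (simp add: n_def)
  define a where "a i = pmf (W (xs!i) (fs!i)) (ws!i)" for i
  define b where "b i = pmf (bind_pmf (\<kappa> (xs!i)) (W (xs!i))) (ws!i)" for i
  have fi: "i < n \<Longrightarrow> fs ! i \<in> set_pmf (\<kappa> (xs!i))" for i
    using set_plist_nth[OF fs, of i] by (simp add: n_def)
  have wi: "i < n \<Longrightarrow> ws ! i \<in> set_pmf (W (xs!i) (fs!i))" for i
    using set_plist_nth[OF ws[unfolded Wn_def], of i] lf by (simp add: n_def)
  have pos: "i \<in> {..<n} \<Longrightarrow> a i > 0 \<and> b i > 0" for i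
  proof -
    assume i: "i \<in> {..<n}"
    have "ws ! i \<in> set_pmf (bind_pmf (\<kappa> (xs!i)) (W (xs!i)))"
      using fi[of i] wi[of i] i by (auto simp: set_bind_pmf)
    then show ?thesis using wi[of i] i by (auto simp: a_def b_def pmf_positive)
  qed
  have pa: "pmf (Wn W xs fs) ws = prod a {..<n}"
    unfolding Wn_def pmf_plist using lf lw
    by (simp add: prod_list_prod_nth a_def atLeast0LessThan n_def)
  have pb: "pmf (plist (map (\<lambda>x. bind_pmf (\<kappa> x) (W x)) xs)) ws = prod b {..<n}"
    unfolding pmf_plist using lw
    by (simp add: prod_list_prod_nth b_def atLeast0LessThan n_def)
  have "log 2 t < (\<Sum>i\<in>{..<n}. log 2 (a i / b i))"
    by (rule prod_ratio_log) (use pos t gt pa pb in auto)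
  also have "\<dots> = (\<Sum>z\<leftarrow>zip xs (zip fs ws). (case z of (x, f, w) \<Rightarrow>
            log 2 (pmf (W x f) w / pmf (bind_pmf (\<kappa> x) (W x)) w)))"
    using lf lw by (simp add: sum_list_sum_nth atLeast0LessThan a_def b_def n_def)
  finally show ?thesis .
qed

lemma prob_bind_fin:
  assumes M: "finite (set_pmf M)" and N: "\<And>x. x \<in> set_pmf M \<Longrightarrow> finite (set_pmf (N x))"
  shows "measure_pmf.prob (bind_pmf M N) A = measure_pmf.expectation M (\<lambda>x. measure_pmf.prob (N x) A)"
  using int_bind_fin[OF M N, where f="indicator A"] by simp

lemma prob_sum_if:
  assumes "finite B" "set_pmf M \<subseteq> B"
  shows "(\<Sum>b\<in>B. if P b then pmf M b else 0) = measure_pmf.prob M {b. P b}"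
proof -
  have "measure_pmf.prob M {b. P b} = measure_pmf.prob M {b\<in>B. P b}"
    using assms by (intro measure_eq_AE) (auto simp: AE_measure_pmf_iff)
  also have "\<dots> = (\<Sum>b\<in>{b\<in>B. P b}. pmf M b)"
    using assms by (subst measure_measure_pmf_finite) auto
  also have "\<dots> = (\<Sum>b\<in>B. if P b then pmf M b else 0)"
    using assms by (simp add: sum.inter_filter)
  finally show ?thesis ..
qed

lemma prob_mono_supp:
  assumes "\<And>x. x \<in> set_pmf M \<Longrightarrow> x \<in> A \<Longrightarrow> x \<in> B"
  shows "measure_pmf.prob M A \<le> measure_pmf.prob M B"
proof -
  have "measure_pmf.prob M A = measure_pmf.prob M (A \<inter> set_pmf M)"
    by (simp add: measure_Int_set_pmf)
  also have "\<dots> \<le> measure_pmf.prob M B"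
    using assms by (intro measure_pmf.finite_measure_mono) auto
  finally show ?thesis .
qed

lemma coding:
  fixes px :: "'x pmf" and \<kappa> :: "'x \<Rightarrow> 'v pmf" and W :: "'x \<Rightarrow> 'v \<Rightarrow> 'w pmf"
  assumes fpx: "finite (set_pmf px)"
    and fk: "\<And>x. x \<in> set_pmf px \<Longrightarrow> finite (set_pmf (\<kappa> x))"
    and fW: "\<And>x f. x \<in> set_pmf px \<Longrightarrow> f \<in> set_pmf (\<kappa> x) \<Longrightarrow> finite (set_pmf (W x f))"
    and K: "K > 0" and t: "t > 0"
  defines "g \<equiv> (\<lambda>(x, f, w). log 2 (pmf (W x f) w / pmf (bind_pmf (\<kappa> x) (W x)) w))"
  shows "\<exists>cb. (\<forall>xs\<in>set_pmf (iid_pmf n px). \<forall>k<K. cb xs ! k \<in> set_pmf (plist (map \<kappa> xs))) \<and>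
    tv_dist (bind_pmf (iid_pmf n px) (\<lambda>xs. map_pmf (Pair xs) (bind_pmf (pmf_of_set {..<K}) (\<lambda>k. Wn W xs (cb xs ! k)))))
            (bind_pmf (iid_pmf n px) (\<lambda>xs. map_pmf (Pair xs) (plist (map (\<lambda>x. bind_pmf (\<kappa> x) (W x)) xs))))
    \<le> ennreal (sqrt (t / K) + 2 * measure_pmf.prob (iid_pmf n (joint3 px \<kappa> W)) {zs. (\<Sum>z\<leftarrow>zs. g z) > log 2 t})"
proof -
  define \<mu> where "\<mu> xs = plist (map \<kappa> xs)" for xs
  define Q where "Q xs = bind_pmf (\<mu> xs) (Wn W xs)" for xs
  define B where "B xs = (\<Union>fs\<in>set_pmf (\<mu> xs). set_pmf (Wn W xs fs))" for xs
  define R where "R xs = measure_pmf.expectation (\<mu> xs)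
        (\<lambda>fs. \<Sum>b\<in>B xs. if pmf (Wn W xs fs) b > t * pmf (Q xs) b then pmf (Wn W xs fs) b else 0)" for xs
  let ?X = "iid_pmf n px"
  have fX: "finite (set_pmf ?X)" using finite_set_iid[OF fpx] .
  have xs_px: "x \<in> set_pmf px" if "xs \<in> set_pmf ?X" "x \<in> set xs" for xs x
    using that by (auto simp: iid_plist set_plist list_all2_conv_all_nth in_set_conv_nth)
  have fmu: "finite (set_pmf (\<mu> xs))" if "xs \<in> set_pmf ?X" for xs
    unfolding \<mu>_def by (rule finite_set_plist) (use xs_px[OF that] fk in auto)
  have fWn: "finite (set_pmf (Wn W xs fs))" if "xs \<in> set_pmf ?X" "fs \<in> set_pmf (\<mu> xs)" for xs fs
  proof -
    have "length fs = length xs" using that(2) by (simp add: \<mu>_def length_plist)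
    show ?thesis unfolding Wn_def
    proof (intro finite_set_plist)
      fix p assume "p \<in> set (map2 W xs fs)"
      then obtain i where i: "i < length xs" "p = W (xs ! i) (fs ! i)"
        using \<open>length fs = length xs\<close> by (auto simp: in_set_conv_nth)
      have xi: "xs ! i \<in> set_pmf px" using xs_px[OF that(1)] i by auto
      have fi: "fs ! i \<in> set_pmf (\<kappa> (xs ! i))"
        using set_plist_nth[of fs "map \<kappa> xs" i] that(2) i by (simp add: \<mu>_def)
      show "finite (set_pmf p)" using fW[OF xi fi] i by simp
    qed
  qed
  have fB: "finite (B xs)" if "xs \<in> set_pmf ?X" for xs
    using fmu[OF that] fWn[OF that] by (auto simp: B_def)
  have QB: "set_pmf (Q xs) \<subseteq> B xs" for xs by (auto simp: Q_def B_def)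
  have Qeq: "Q xs = plist (map (\<lambda>x. bind_pmf (\<kappa> x) (W x)) xs)" for xs
    unfolding Q_def \<mu>_def by (rule bind_Wn)
  have ex: "\<exists>cb\<in>set_pmf (iid_pmf K (\<mu> xs)).
      (\<Sum>b\<in>B xs. \<bar>pmf (bind_pmf (pmf_of_set {..<K}) (\<lambda>k. Wn W xs (cb ! k))) b - pmf (Q xs) b\<bar>)
        \<le> sqrt (t / K) + 2 * R xs" if "xs \<in> set_pmf ?X" for xs
    apply (rule exists_le_expectation)
     apply (rule finite_set_iid[OF fmu[OF that]])
    unfolding R_def Q_def B_def
    by (rule soft_cover[OF fmu[OF that] fWn[OF that] K t])
  then obtain cb where cb: "\<And>xs. xs \<in> set_pmf ?X \<Longrightarrow> cb xs \<in> set_pmf (iid_pmf K (\<mu> xs)) \<and>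
      (\<Sum>b\<in>B xs. \<bar>pmf (bind_pmf (pmf_of_set {..<K}) (\<lambda>k. Wn W xs (cb xs ! k))) b - pmf (Q xs) b\<bar>)
        \<le> sqrt (t / K) + 2 * R xs"
    by metis
  have cbk: "cb xs ! k \<in> set_pmf (\<mu> xs)" if "xs \<in> set_pmf ?X" "k < K" for xs k
    using cb[OF that(1)] that(2) by (auto simp: iid_plist set_plist list_all2_conv_all_nth)
  have setD: "set_pmf (bind_pmf (pmf_of_set {..<K}) (\<lambda>k. Wn W xs (cb xs ! k))) \<subseteq> B xs"
    if "xs \<in> set_pmf ?X" for xs
  proof -
    have "set_pmf (pmf_of_set {..<K}) = {..<K}" using K by (intro set_pmf_of_set) auto
    then show ?thesis using cbk[OF that] by (auto simp: B_def set_bind_pmf)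
  qed
  have "tv_dist (bind_pmf ?X (\<lambda>xs. map_pmf (Pair xs) (bind_pmf (pmf_of_set {..<K}) (\<lambda>k. Wn W xs (cb xs ! k)))))
            (bind_pmf ?X (\<lambda>xs. map_pmf (Pair xs) (Q xs)))
     = ennreal (\<Sum>xs\<in>set_pmf ?X. pmf ?X xs * (\<Sum>b\<in>B xs. \<bar>pmf (bind_pmf (pmf_of_set {..<K}) (\<lambda>k. Wn W xs (cb xs ! k))) b - pmf (Q xs) b\<bar>))"
    by (rule tv_bind_pair[OF fX]) (use fB setD QB in auto)
  also have "(\<Sum>xs\<in>set_pmf ?X. pmf ?X xs * (\<Sum>b\<in>B xs. \<bar>pmf (bind_pmf (pmf_of_set {..<K}) (\<lambda>k. Wn W xs (cb xs ! k))) b - pmf (Q xs) b\<bar>))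
     \<le> (\<Sum>xs\<in>set_pmf ?X. pmf ?X xs * (sqrt (t / K) + 2 * R xs))"
    by (intro sum_mono mult_left_mono) (use cb in auto)
  also have "\<dots> = sqrt (t / K) + 2 * measure_pmf.expectation ?X R"
  proof -
    have "(\<Sum>xs\<in>set_pmf ?X. pmf ?X xs * (sqrt (t / K) + 2 * R xs))
       = sqrt (t / K) * (\<Sum>xs\<in>set_pmf ?X. pmf ?X xs) + 2 * (\<Sum>xs\<in>set_pmf ?X. pmf ?X xs * R xs)"
      by (simp add: algebra_simps sum.distrib sum_distrib_left sum_distrib_right)
    moreover have "(\<Sum>xs\<in>set_pmf ?X. pmf ?X xs) = 1" by (rule sum_pmf_eq_1[OF fX order_refl])
    moreover have "measure_pmf.expectation ?X R = (\<Sum>xs\<in>set_pmf ?X. pmf ?X xs * R xs)"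
      by (subst integral_measure_pmf[OF fX]) auto
    ultimately show ?thesis by simp
  qed
  also have "measure_pmf.expectation ?X R \<le> measure_pmf.prob (iid_pmf n (joint3 px \<kappa> W)) {zs. (\<Sum>z\<leftarrow>zs. g z) > log 2 t}"
  proof -
    let ?A = "{zs. (\<Sum>z\<leftarrow>zs. g z) > log 2 t}"
    have "measure_pmf.prob (iid_pmf n (joint3 px \<kappa> W)) ?A =
        measure_pmf.expectation ?X (\<lambda>xs. measure_pmf.expectation (\<mu> xs)
          (\<lambda>fs. measure_pmf.prob (Wn W xs fs) ((\<lambda>ws. zip xs (zip fs ws)) -` ?A)))"
    proof -
      have "measure_pmf.prob (iid_pmf n (joint3 px \<kappa> W)) ?A =
          measure_pmf.expectation ?X (\<lambda>xs. measure_pmf.prob (bind_pmf (\<mu> xs)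
            (\<lambda>fs. map_pmf (\<lambda>ws. zip xs (zip fs ws)) (Wn W xs fs))) ?A)"
        unfolding iid_joint3 \<mu>_def[symmetric]
        by (rule prob_bind_fin[OF fX]) (use fmu fWn in auto)
      also have "\<dots> = measure_pmf.expectation ?X (\<lambda>xs. measure_pmf.expectation (\<mu> xs)
          (\<lambda>fs. measure_pmf.prob (Wn W xs fs) ((\<lambda>ws. zip xs (zip fs ws)) -` ?A)))"
        by (intro integral_cong_AE) (auto simp: AE_measure_pmf_iff prob_bind_fin fmu fWn)
      finally show ?thesis .
    qed
    moreover have "measure_pmf.expectation ?X R \<le> measure_pmf.expectation ?X (\<lambda>xs. measure_pmf.expectation (\<mu> xs)
          (\<lambda>fs. measure_pmf.prob (Wn W xs fs) ((\<lambda>ws. zip xs (zip fs ws)) -` ?A)))"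
    proof (rule integral_mono_AE)
      show "integrable ?X R" using fX by (simp add: integrable_measure_pmf_finite)
      show "integrable ?X (\<lambda>xs. measure_pmf.expectation (\<mu> xs)
          (\<lambda>fs. measure_pmf.prob (Wn W xs fs) ((\<lambda>ws. zip xs (zip fs ws)) -` ?A)))"
        using fX by (simp add: integrable_measure_pmf_finite)
      show "AE xs in ?X. R xs \<le> measure_pmf.expectation (\<mu> xs)
          (\<lambda>fs. measure_pmf.prob (Wn W xs fs) ((\<lambda>ws. zip xs (zip fs ws)) -` ?A))"
        unfolding AE_measure_pmf_iff
      proof
        fix xs assume xs: "xs \<in> set_pmf ?X"
        show "R xs \<le> measure_pmf.expectation (\<mu> xs)
          (\<lambda>fs. measure_pmf.prob (Wn W xs fs) ((\<lambda>ws. zip xs (zip fs ws)) -` ?A))"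
          unfolding R_def
        proof (rule integral_mono_AE)
          show "integrable (measure_pmf (\<mu> xs)) (\<lambda>fs. \<Sum>b\<in>B xs. if pmf (Wn W xs fs) b > t * pmf (Q xs) b then pmf (Wn W xs fs) b else 0)"
            using fmu[OF xs] by (simp add: integrable_measure_pmf_finite)
          show "integrable (measure_pmf (\<mu> xs)) (\<lambda>fs. measure_pmf.prob (Wn W xs fs) ((\<lambda>ws. zip xs (zip fs ws)) -` ?A))"
            using fmu[OF xs] by (simp add: integrable_measure_pmf_finite)
          show "AE fs in \<mu> xs. (\<Sum>b\<in>B xs. if pmf (Wn W xs fs) b > t * pmf (Q xs) b then pmf (Wn W xs fs) b else 0)
              \<le> measure_pmf.prob (Wn W xs fs) ((\<lambda>ws. zip xs (zip fs ws)) -` ?A)"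
            unfolding AE_measure_pmf_iff
          proof
            fix fs assume fs: "fs \<in> set_pmf (\<mu> xs)"
            have "(\<Sum>b\<in>B xs. if pmf (Wn W xs fs) b > t * pmf (Q xs) b then pmf (Wn W xs fs) b else 0)
                = measure_pmf.prob (Wn W xs fs) {b. pmf (Wn W xs fs) b > t * pmf (Q xs) b}"
              by (rule prob_sum_if) (use fB[OF xs] fs in \<open>auto simp: B_def\<close>)
            also have "\<dots> \<le> measure_pmf.prob (Wn W xs fs) ((\<lambda>ws. zip xs (zip fs ws)) -` ?A)"
            proof (rule prob_mono_supp)
              fix ws assume ws: "ws \<in> set_pmf (Wn W xs fs)" and gt: "ws \<in> {b. pmf (Wn W xs fs) b > t * pmf (Q xs) b}"
              have "log 2 t < (\<Sum>z\<leftarrow>zip xs (zip fs ws). (case z of (x, f, w) \<Rightarrow>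
                  log 2 (pmf (W x f) w / pmf (bind_pmf (\<kappa> x) (W x)) w)))"
                by (rule key_pointwise[OF fs[unfolded \<mu>_def] ws t]) (use gt in \<open>simp add: Qeq\<close>)
              then show "ws \<in> (\<lambda>ws. zip xs (zip fs ws)) -` ?A" by (simp add: g_def)
            qed
            finally show "(\<Sum>b\<in>B xs. if pmf (Wn W xs fs) b > t * pmf (Q xs) b then pmf (Wn W xs fs) b else 0)
              \<le> measure_pmf.prob (Wn W xs fs) ((\<lambda>ws. zip xs (zip fs ws)) -` ?A)" .
          qed
        qed
      qed
    qed
    ultimately show ?thesis by simp
  qed
  finally have main: "tv_dist (bind_pmf ?X (\<lambda>xs. map_pmf (Pair xs) (bind_pmf (pmf_of_set {..<K}) (\<lambda>k. Wn W xs (cb xs ! k)))))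
            (bind_pmf ?X (\<lambda>xs. map_pmf (Pair xs) (Q xs)))
     \<le> ennreal (sqrt (t / K) + 2 * measure_pmf.prob (iid_pmf n (joint3 px \<kappa> W)) {zs. (\<Sum>z\<leftarrow>zs. g z) > log 2 t})"
    by (simp add: ennreal_leI)
  show ?thesis
    by (rule exI[of _ cb]) (use main cbk in \<open>simp add: Qeq \<mu>_def\<close>)
qed

lemma pair_unif:
  assumes "K1 > 0" "K2 > 0"
  shows "map_pmf (\<lambda>(a,b). a * K2 + b) (pair_pmf (pmf_of_set {..<K1}) (pmf_of_set {..<(K2::nat)}))
       = pmf_of_set {..<K1 * K2}"
proof -
  have ne: "{..<K1} \<noteq> {}" "{..<K2} \<noteq> {}" using assms by auto
  have "pair_pmf (pmf_of_set {..<K1}) (pmf_of_set {..<K2}) = pmf_of_set ({..<K1} \<times> {..<K2})"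
  proof (rule pmf_eqI)
    fix z :: "nat \<times> nat"
    have ne2: "{..<K1} \<times> {..<K2} \<noteq> {}" using ne by auto
    show "pmf (pair_pmf (pmf_of_set {..<K1}) (pmf_of_set {..<K2})) z = pmf (pmf_of_set ({..<K1} \<times> {..<K2})) z"
      by (cases z) (simp add: pmf_pair pmf_of_set[OF ne(1)] pmf_of_set[OF ne(2)] pmf_of_set[OF ne2]
          indicator_def card_cartesian_product)
  qed
  also have "map_pmf (\<lambda>(a,b). a * K2 + b) \<dots> = pmf_of_set ((\<lambda>(a,b). a * K2 + b) ` ({..<K1} \<times> {..<K2}))"
  proof (rule map_pmf_of_set_inj)
    show "inj_on (\<lambda>(a, b). a * K2 + b) ({..<K1} \<times> {..<K2})"
    proof (rule inj_onI, clarify)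
      fix a b a' b' assume "a * K2 + b = a' * K2 + b'" "b < K2" "b' < K2"
      then show "a = a' \<and> b = b'"
        by (metis add.commute div_mult_self1 div_less mod_mult_self1 mod_less not_less0 nat_neq_iff add_cancel_left_right assms(2))
    qed
  qed (use ne in auto)
  also have "(\<lambda>(a,b). a * K2 + b) ` ({..<K1} \<times> {..<K2}) = {..<K1 * K2}"
  proof safe
    fix a b assume "a < K1" "b < K2"
    then have "a * K2 + b < a * K2 + K2" by simp
    also have "\<dots> \<le> K1 * K2" using \<open>a < K1\<close> by (metis Suc_leI mult_Suc mult_le_mono1 add.commute)
    finally show "a * K2 + b < K1 * K2" .
  next
    fix k assume k: "k < K1 * K2"
    have "k = (k div K2) * K2 + k mod K2" by simp
    moreover have "k div K2 < K1" using k by (simp add: less_mult_imp_div_less)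
    moreover have "k mod K2 < K2" using assms by simp
    ultimately show "k \<in> (\<lambda>(a,b). a * K2 + b) ` ({..<K1} \<times> {..<K2})"
      by (intro image_eqI[of _ _ "(k div K2, k mod K2)"]) auto
  qed
  finally show ?thesis .
qed

lemma entropy_unif:
  assumes "K > 0"
  shows "entropy_pmf (pmf_of_set {..<(K::nat)}) = ennreal (log 2 K)"
proof -
  have ne: "{..<K} \<noteq> {}" using assms by auto
  have "entropy_pmf (pmf_of_set {..<K}) = (\<integral>\<^sup>+ x. ennreal (log 2 K / K) * indicator {..<K} x \<partial>count_space UNIV)"
    unfolding entropy_pmf_def
  proof (intro nn_integral_cong)
    fix x
    show "ennreal (if pmf (pmf_of_set {..<K}) x = 0 then 0 else - pmf (pmf_of_set {..<K}) x * log 2 (pmf (pmf_of_set {..<K}) x))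
       = ennreal (log 2 K / K) * indicator {..<K} x"
      using ne assms by (auto simp: indicator_def log_divide)
  qed
  also have "\<dots> = ennreal (log 2 K / K) * of_nat K"
    by (simp add: nn_integral_count_space_indicator[symmetric] nn_integral_count_space_finite)
  also have "\<dots> = of_nat K * ennreal (log 2 K / K)" by (rule mult.commute)
  also have "\<dots> = ennreal (real K) * ennreal (log 2 K / K)" by (simp add: ennreal_of_nat_eq_real_of_nat)
  also have "\<dots> = ennreal (real K * (log 2 K / K))"
    using assms by (subst ennreal_mult) auto
  also have "real K * (log 2 K / K) = log 2 K" using assms by simp
  finally show ?thesis .
qed

lemma iid_map: "iid_pmf n (map_pmf \<phi> p) = map_pmf (map \<phi>) (iid_pmf n p)"
  by (simp add: iid_plist plist_map[symmetric])

lemma tab_lemma: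
  assumes S: "finite S" and zs: "\<forall>z\<in>set zs. z \<in> S"
  shows "map_pmf (\<lambda>hs. map2 (\<lambda>h z. h z) hs zs) (iid_pmf (length zs) (Pi_pmf S d V)) = plist (map V zs)"
  using zs
proof (induction zs)
  case Nil
  then show ?case by simp
next
  case (Cons z zs)
  have "map_pmf (\<lambda>hs. map2 (\<lambda>h z. h z) hs (z # zs)) (iid_pmf (length (z # zs)) (Pi_pmf S d V))
     = bind_pmf (Pi_pmf S d V) (\<lambda>h. map_pmf (\<lambda>ys. h z # ys) (map_pmf (\<lambda>hs. map2 (\<lambda>h z. h z) hs zs) (iid_pmf (length zs) (Pi_pmf S d V))))"
    by (simp add: map_bind_pmf pmf.map_comp o_def)
  also have "\<dots> = bind_pmf (map_pmf (\<lambda>h. h z) (Pi_pmf S d V)) (\<lambda>y. map_pmf (\<lambda>ys. y # ys) (plist (map V zs)))"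
    using Cons by (simp add: bind_map_pmf)
  also have "\<dots> = plist (map V (z # zs))"
    using Cons.prems S by (simp add: Pi_pmf_component)
  finally show ?case .
qed

lemma plist_pair:
  "map_pmf (\<lambda>ws. (map fst ws, map snd ws)) (plist (map2 (\<lambda>x f. pair_pmf (A x f) (B x f)) xs fs))
    = pair_pmf (plist (map2 A xs fs)) (plist (map2 B xs fs))"
proof (induction xs arbitrary: fs)
  case Nil
  then show ?case by (simp add: pair_return_pmf1)
next
  case (Cons x xs)
  show ?case
  proof (cases fs)
    case Nil
    then show ?thesis by (simp add: pair_return_pmf1)
  next
    case (Cons f fs')
    have "map_pmf (\<lambda>ws. (map fst ws, map snd ws)) (plist (map2 (\<lambda>x f. pair_pmf (A x f) (B x f)) (x # xs) (f # fs')))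
      = bind_pmf (pair_pmf (A x f) (B x f)) (\<lambda>ab. map_pmf (\<lambda>(u, v). (fst ab # u, snd ab # v))
          (map_pmf (\<lambda>ws. (map fst ws, map snd ws)) (plist (map2 (\<lambda>x f. pair_pmf (A x f) (B x f)) xs fs'))))"
      by (simp add: map_bind_pmf pmf.map_comp o_def)
    also have "\<dots> = bind_pmf (pair_pmf (A x f) (B x f)) (\<lambda>ab. map_pmf (\<lambda>(u, v). (fst ab # u, snd ab # v))
          (pair_pmf (plist (map2 A xs fs')) (plist (map2 B xs fs'))))"
      by (simp only: Cons.IH)
    also have "\<dots> = pair_pmf (plist (map2 A (x # xs) (f # fs'))) (plist (map2 B (x # xs) (f # fs')))"
      unfolding pair_pmf_def
      apply (simp add: bind_assoc_pmf bind_return_pmf map_bind_pmf bind_map_pmf map_pmf_def)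
      apply (subst bind_commute_pmf[of "B x f"])
      apply (simp add: bind_assoc_pmf bind_return_pmf)
      done
    finally show ?thesis using Cons by simp
  qed
qed

lemma msgs2: "messages e1 e2 a b m1 m2 2 = [e1 1 a m1 [], e2 2 b m2 [e1 1 a m1 []]]"
  by (simp add: numeral_2_eq_2 Let_def)

lemma bind_pair_swap:
  "bind_pmf (pair_pmf U1 T1) (\<lambda>a. bind_pmf (pair_pmf U2 T2) (\<lambda>b. return_pmf (F (fst a) (fst b) (snd a) (snd b))))
   = bind_pmf U1 (\<lambda>k1. bind_pmf U2 (\<lambda>k2. bind_pmf T1 (\<lambda>h1. bind_pmf T2 (\<lambda>h2. return_pmf (F k1 k2 h1 h2)))))"
  unfolding pair_pmf_def
  apply (simp add: bind_assoc_pmf bind_return_pmf)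
  apply (subst bind_commute_pmf[of T1])
  apply (simp add: bind_assoc_pmf bind_return_pmf)
  done

lemma bind_two_return:
  "bind_pmf T1 (\<lambda>h1. bind_pmf T2 (\<lambda>h2. return_pmf (c, G1 h1, G2 h2)))
   = map_pmf (\<lambda>(u,v). (c, u, v)) (pair_pmf (map_pmf G1 T1) (map_pmf G2 T2))"
  unfolding pair_pmf_def
  by (simp add: bind_assoc_pmf bind_return_pmf map_bind_pmf bind_map_pmf map_pmf_def)

lemma bind_unif_pair:
  fixes K1 K2 :: nat
  assumes "K1 > 0" "K2 > 0"
  shows "bind_pmf (pmf_of_set {..<K1 * K2}) G = bind_pmf (pmf_of_set {..<K1}) (\<lambda>k1. bind_pmf (pmf_of_set {..<K2}) (\<lambda>k2. G (k1 * K2 + k2)))"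
proof -
  have "bind_pmf (pmf_of_set {..<K1 * K2}) G = bind_pmf (map_pmf (\<lambda>(a,b). a * K2 + b) (pair_pmf (pmf_of_set {..<K1}) (pmf_of_set {..<(K2::nat)}))) G"
    using pair_unif[OF assms] by simp
  also have "\<dots> = bind_pmf (pmf_of_set {..<K1}) (\<lambda>k1. bind_pmf (pmf_of_set {..<K2}) (\<lambda>k2. G (k1 * K2 + k2)))"
    unfolding pair_pmf_def by (simp add: bind_map_pmf bind_assoc_pmf bind_return_pmf)
  finally show ?thesis .
qed

lemma protocol:
  fixes q :: "('x \<times> 'x \<times> 'y1 \<times> 'y2) pmf" and px :: "'x pmf" and \<kappa> :: "'x \<Rightarrow> 'v pmf"
    and W1 :: "'x \<Rightarrow> 'v \<Rightarrow> 'y1 pmf" and W2 :: "'x \<Rightarrow> 'v \<Rightarrow> 'y2 pmf" and cb :: "'x list \<Rightarrow> 'v list list"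
    and K1 K2 :: nat
  assumes qx: "map_pmf (\<lambda>(a,b,c,d). (a,b)) q = map_pmf (\<lambda>x. (x,x)) px"
    and fpx: "finite (set_pmf px)" and fk: "\<And>x. x \<in> set_pmf px \<Longrightarrow> finite (set_pmf (\<kappa> x))"
    and K1: "K1 > 0" and K2: "K2 > 0"
    and cbk: "\<And>xs k. xs \<in> set_pmf (iid_pmf n px) \<Longrightarrow> k < K1 * K2 \<Longrightarrow> cb xs ! k \<in> set_pmf (plist (map \<kappa> xs))"
  shows "\<exists>(P1::nat pmf) (P2::nat pmf) (e1::nat \<Rightarrow> 'x list \<Rightarrow> nat \<Rightarrow> nat list \<Rightarrow> nat)
        (e2::nat \<Rightarrow> 'x list \<Rightarrow> nat \<Rightarrow> nat list \<Rightarrow> nat)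
        (d1::'x list \<Rightarrow> nat \<Rightarrow> nat list \<Rightarrow> 'y1 list) (d2::'x list \<Rightarrow> nat \<Rightarrow> nat list \<Rightarrow> 'y2 list).
      let J = code_space n q P1 P2;
          C = (\<lambda>(xs, m1, m2). messages e1 e2 (map fst xs) (map snd xs) m1 m2 2);
          msg_law = (\<lambda>i. map_pmf (\<lambda>w. C w ! (i - 1)) J)
      in msg_law 1 = pmf_of_set {..<K1} \<and> msg_law 2 = pmf_of_set {..<K2}
       \<and> map_pmf (\<lambda>(xs, m1, m2). (map fst xs, map snd xs,
                  d1 (map fst xs) m1 (C (xs, m1, m2)), d2 (map snd xs) m2 (C (xs, m1, m2)))) J
         = map_pmf (\<lambda>(xs, ws). (xs, xs, map fst ws, map snd ws))
             (bind_pmf (iid_pmf n px) (\<lambda>xs. map_pmf (Pair xs)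
                (bind_pmf (pmf_of_set {..<K1 * K2}) (\<lambda>k. Wn (\<lambda>x f. pair_pmf (W1 x f) (W2 x f)) xs (cb xs ! k)))))"
proof -
  define S where "S = Sigma (set_pmf px) (\<lambda>x. set_pmf (\<kappa> x))"
  have fS: "finite S" using fpx fk by (auto simp: S_def)
  define H1 where "H1 = Pi_pmf S undefined (\<lambda>(x,f). W1 x f)"
  define H2 where "H2 = Pi_pmf S undefined (\<lambda>(x,f). W2 x f)"
  define D1 where "D1 = pair_pmf (pmf_of_set {..<K1}) (iid_pmf n H1)"
  define D2 where "D2 = pair_pmf (pmf_of_set {..<K2}) (iid_pmf n H2)"
  define P1 where "P1 = map_pmf (to_nat_on (set_pmf D1)) D1"
  define P2 where "P2 = map_pmf (to_nat_on (set_pmf D2)) D2"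
  define dec1 where "dec1 = from_nat_into (set_pmf D1)"
  define dec2 where "dec2 = from_nat_into (set_pmf D2)"
  define e1 :: "nat \<Rightarrow> 'x list \<Rightarrow> nat \<Rightarrow> nat list \<Rightarrow> nat" where "e1 = (\<lambda>i xs m prev. fst (dec1 m))"
  define e2 :: "nat \<Rightarrow> 'x list \<Rightarrow> nat \<Rightarrow> nat list \<Rightarrow> nat" where "e2 = (\<lambda>i xs m prev. fst (dec2 m))"
  define d1 :: "'x list \<Rightarrow> nat \<Rightarrow> nat list \<Rightarrow> 'y1 list" where
    "d1 = (\<lambda>xs m c. map2 (\<lambda>h z. h z) (snd (dec1 m)) (zip xs (cb xs ! (c ! 0 * K2 + c ! 1))))"
  define d2 :: "'x list \<Rightarrow> nat \<Rightarrow> nat list \<Rightarrow> 'y2 list" where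
    "d2 = (\<lambda>xs m c. map2 (\<lambda>h z. h z) (snd (dec2 m)) (zip xs (cb xs ! (c ! 0 * K2 + c ! 1))))"
  have dec1_enc: "dec1 (to_nat_on (set_pmf D1) a) = a" if "a \<in> set_pmf D1" for a
    unfolding dec1_def using that by (simp add: countable_set_pmf)
  have dec2_enc: "dec2 (to_nat_on (set_pmf D2) a) = a" if "a \<in> set_pmf D2" for a
    unfolding dec2_def using that by (simp add: countable_set_pmf)
  have mapP1: "map_pmf (\<lambda>m. F (dec1 m)) P1 = map_pmf F D1" for F :: "_ \<Rightarrow> 'z"
    unfolding P1_def pmf.map_comp o_def by (rule map_pmf_cong) (auto simp: dec1_enc)
  have mapP2: "map_pmf (\<lambda>m. F (dec2 m)) P2 = map_pmf F D2" for F :: "_ \<Rightarrow> 'z"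
    unfolding P2_def pmf.map_comp o_def by (rule map_pmf_cong) (auto simp: dec2_enc)
  have bindP1: "bind_pmf P1 (\<lambda>m. F (dec1 m)) = bind_pmf D1 F" for F :: "_ \<Rightarrow> 'z pmf"
    unfolding P1_def bind_map_pmf by (rule pmf_eq_bind_cong) (auto simp: dec1_enc)
  have bindP2: "bind_pmf P2 (\<lambda>m. F (dec2 m)) = bind_pmf D2 F" for F :: "_ \<Rightarrow> 'z pmf"
    unfolding P2_def bind_map_pmf by (rule pmf_eq_bind_cong) (auto simp: dec2_enc)
  have q2: "map_pmf (\<lambda>(a,b,c,d). (a,b)) q = map_pmf (\<lambda>x. (x,x)) px" by (rule qx)
  have J: "code_space n q P1 P2 = bind_pmf (iid_pmf n px) (\<lambda>ys. bind_pmf P1 (\<lambda>m1. bind_pmf P2 (\<lambda>m2.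
              return_pmf (map (\<lambda>x. (x,x)) ys, m1, m2))))"
    unfolding code_space_def q2 iid_map by (simp add: bind_map_pmf)
  define C where "C = (\<lambda>(xs::('x \<times> 'x) list, m1, m2). messages e1 e2 (map fst xs) (map snd xs) m1 m2 2)"
  have C: "C (xs, m1, m2) = [fst (dec1 m1), fst (dec2 m2)]" for xs m1 m2
    by (simp add: C_def msgs2 e1_def e2_def)
  have law1: "map_pmf (\<lambda>w. C w ! (1 - 1)) (code_space n q P1 P2) = pmf_of_set {..<K1}"
  proof -
    have "map_pmf (\<lambda>w. C w ! (1 - 1)) (code_space n q P1 P2)
       = bind_pmf (iid_pmf n px) (\<lambda>ys. map_pmf (\<lambda>m1. fst (dec1 m1)) P1)"
      unfolding J by (simp add: map_bind_pmf pmf.map_comp o_def C map_pmf_const map_pmf_def[symmetric])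
    also have "\<dots> = map_pmf fst D1" by (simp add: mapP1)
    also have "\<dots> = pmf_of_set {..<K1}" by (simp add: D1_def map_fst_pair_pmf)
    finally show ?thesis .
  qed
  have law2: "map_pmf (\<lambda>w. C w ! (2 - 1)) (code_space n q P1 P2) = pmf_of_set {..<K2}"
  proof -
    have "map_pmf (\<lambda>w. C w ! (2 - 1)) (code_space n q P1 P2)
       = bind_pmf (iid_pmf n px) (\<lambda>ys. map_pmf (\<lambda>m2. fst (dec2 m2)) P2)"
      unfolding J by (simp add: map_bind_pmf pmf.map_comp o_def C map_pmf_const map_pmf_def[symmetric])
    also have "\<dots> = map_pmf fst D2" by (simp add: mapP2)
    also have "\<dots> = pmf_of_set {..<K2}" by (simp add: D2_def map_fst_pair_pmf)
    finally show ?thesis .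
  qed
  define W where "W = (\<lambda>x f. pair_pmf (W1 x f) (W2 x f))"
  define Y where "Y = (\<lambda>ys k1 k2 (h1::('x \<times> 'v \<Rightarrow> 'y1) list) (h2::('x \<times> 'v \<Rightarrow> 'y2) list).
     (ys, ys, map2 (\<lambda>h z. h z) h1 (zip ys (cb ys ! (k1 * K2 + k2))),
              map2 (\<lambda>h z. h z) h2 (zip ys (cb ys ! (k1 * K2 + k2)))))"
  have setu1: "set_pmf (pmf_of_set {..<K1}) = {..<K1}" using K1 by (intro set_pmf_of_set) auto
  have setu2: "set_pmf (pmf_of_set {..<K2}) = {..<K2}" using K2 by (intro set_pmf_of_set) auto
  have lenys: "length ys = n" if "ys \<in> set_pmf (iid_pmf n px)" for ys
    using that by (simp add: iid_plist length_plist)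
  have ys_px: "ys ! i \<in> set_pmf px" if "ys \<in> set_pmf (iid_pmf n px)" "i < n" for ys i
    using that set_plist_nth[of ys "replicate n px" i] by (simp add: iid_plist)
  have inner: "bind_pmf (iid_pmf n H1) (\<lambda>h1. bind_pmf (iid_pmf n H2) (\<lambda>h2. return_pmf (Y ys k1 k2 h1 h2)))
     = map_pmf (\<lambda>(u,v). (ys, ys, u, v)) (map_pmf (\<lambda>ws. (map fst ws, map snd ws)) (Wn W ys (cb ys ! (k1 * K2 + k2))))"
    if ys: "ys \<in> set_pmf (iid_pmf n px)" and k1: "k1 < K1" and k2: "k2 < K2" for ys k1 k2
  proof -
    define fs where "fs = cb ys ! (k1 * K2 + k2)"
    have "k1 * K2 + k2 < K1 * K2"
    proof -
      have "k1 * K2 + k2 < k1 * K2 + K2" using k2 by simp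
      also have "\<dots> \<le> K1 * K2" using k1 by (metis Suc_leI mult_Suc mult_le_mono1 add.commute)
      finally show ?thesis .
    qed
    then have fs: "fs \<in> set_pmf (plist (map \<kappa> ys))" unfolding fs_def by (rule cbk[OF ys])
    have lfs: "length fs = n" using length_plist[OF fs] lenys[OF ys] by simp
    have zsS: "\<forall>z\<in>set (zip ys fs). z \<in> S"
    proof
      fix z assume "z \<in> set (zip ys fs)"
      then obtain i where i: "i < n" "z = (ys ! i, fs ! i)"
        using lenys[OF ys] lfs by (auto simp: in_set_conv_nth)
      have "fs ! i \<in> set_pmf (\<kappa> (ys ! i))" using set_plist_nth[OF fs, of i] i lenys[OF ys] by simp
      then show "z \<in> S" using ys_px[OF ys i(1)] i by (simp add: S_def)
    qed
    have lz: "length (zip ys fs) = n" using lenys[OF ys] lfs by simp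
    have t1: "map_pmf (\<lambda>h. map2 (\<lambda>h z. h z) h (zip ys fs)) (iid_pmf n H1) = plist (map2 W1 ys fs)"
      using tab_lemma[OF fS zsS, of undefined "\<lambda>(x,f). W1 x f"] unfolding lz H1_def by simp
    have t2: "map_pmf (\<lambda>h. map2 (\<lambda>h z. h z) h (zip ys fs)) (iid_pmf n H2) = plist (map2 W2 ys fs)"
      using tab_lemma[OF fS zsS, of undefined "\<lambda>(x,f). W2 x f"] unfolding lz H2_def by simp
    have "bind_pmf (iid_pmf n H1) (\<lambda>h1. bind_pmf (iid_pmf n H2) (\<lambda>h2. return_pmf (Y ys k1 k2 h1 h2)))
       = map_pmf (\<lambda>(u,v). (ys, ys, u, v)) (pair_pmf (map_pmf (\<lambda>h. map2 (\<lambda>h z. h z) h (zip ys fs)) (iid_pmf n H1))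
                 (map_pmf (\<lambda>h. map2 (\<lambda>h z. h z) h (zip ys fs)) (iid_pmf n H2)))"
      unfolding Y_def fs_def pair_pmf_def
      by (simp add: bind_assoc_pmf bind_return_pmf map_bind_pmf bind_map_pmf map_pmf_def)
    also have "\<dots> = map_pmf (\<lambda>(u,v). (ys, ys, u, v)) (map_pmf (\<lambda>ws. (map fst ws, map snd ws)) (Wn W ys fs))"
      unfolding t1 t2 Wn_def W_def plist_pair ..
    finally show ?thesis by (simp add: fs_def)
  qed
  have out: "map_pmf (\<lambda>(xs, m1, m2). (map fst xs, map snd xs,
                  d1 (map fst xs) m1 (C (xs, m1, m2)), d2 (map snd xs) m2 (C (xs, m1, m2)))) (code_space n q P1 P2)
         = map_pmf (\<lambda>(xs, ws). (xs, xs, map fst ws, map snd ws))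
             (bind_pmf (iid_pmf n px) (\<lambda>xs. map_pmf (Pair xs)
                (bind_pmf (pmf_of_set {..<K1 * K2}) (\<lambda>k. Wn W xs (cb xs ! k)))))"
  proof -
    have "map_pmf (\<lambda>(xs, m1, m2). (map fst xs, map snd xs,
                  d1 (map fst xs) m1 (C (xs, m1, m2)), d2 (map snd xs) m2 (C (xs, m1, m2)))) (code_space n q P1 P2)
      = bind_pmf (iid_pmf n px) (\<lambda>ys. bind_pmf P1 (\<lambda>m1. bind_pmf P2 (\<lambda>m2.
           return_pmf ((\<lambda>a b. Y ys (fst a) (fst b) (snd a) (snd b)) (dec1 m1) (dec2 m2)))))"
      unfolding J by (simp add: map_bind_pmf C d1_def d2_def Y_def o_def)
    also have "\<dots> = bind_pmf (iid_pmf n px) (\<lambda>ys. bind_pmf D1 (\<lambda>a. bind_pmf D2 (\<lambda>b.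
           return_pmf (Y ys (fst a) (fst b) (snd a) (snd b)))))"
    proof -
      have i2: "bind_pmf P2 (\<lambda>m2. return_pmf (Y ys (fst (dec1 m1)) (fst (dec2 m2)) (snd (dec1 m1)) (snd (dec2 m2))))
         = bind_pmf D2 (\<lambda>b. return_pmf (Y ys (fst (dec1 m1)) (fst b) (snd (dec1 m1)) (snd b)))" for ys m1
        using bindP2[of "\<lambda>b. return_pmf (Y ys (fst (dec1 m1)) (fst b) (snd (dec1 m1)) (snd b))"] by simp
      have i1: "bind_pmf P1 (\<lambda>m1. bind_pmf D2 (\<lambda>b. return_pmf (Y ys (fst (dec1 m1)) (fst b) (snd (dec1 m1)) (snd b))))
         = bind_pmf D1 (\<lambda>a. bind_pmf D2 (\<lambda>b. return_pmf (Y ys (fst a) (fst b) (snd a) (snd b))))" for ys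
        using bindP1[of "\<lambda>a. bind_pmf D2 (\<lambda>b. return_pmf (Y ys (fst a) (fst b) (snd a) (snd b)))"] by simp
      show ?thesis by (simp only: i2 i1)
    qed
    also have "\<dots> = bind_pmf (iid_pmf n px) (\<lambda>ys. bind_pmf (pmf_of_set {..<K1}) (\<lambda>k1. bind_pmf (pmf_of_set {..<K2}) (\<lambda>k2.
           bind_pmf (iid_pmf n H1) (\<lambda>h1. bind_pmf (iid_pmf n H2) (\<lambda>h2. return_pmf (Y ys k1 k2 h1 h2))))))"
      unfolding D1_def D2_def by (subst bind_pair_swap) (rule refl)
    also have "\<dots> = bind_pmf (iid_pmf n px) (\<lambda>ys. bind_pmf (pmf_of_set {..<K1}) (\<lambda>k1. bind_pmf (pmf_of_set {..<K2}) (\<lambda>k2.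
           map_pmf (\<lambda>(u,v). (ys, ys, u, v)) (map_pmf (\<lambda>ws. (map fst ws, map snd ws)) (Wn W ys (cb ys ! (k1 * K2 + k2)))))))"
      apply (rule pmf_eq_bind_cong)
      apply (rule pmf_eq_bind_cong)
      apply (rule pmf_eq_bind_cong)
      apply (rule inner)
        apply (auto simp: setu1 setu2)
      done
    also have "\<dots> = bind_pmf (iid_pmf n px) (\<lambda>ys. bind_pmf (pmf_of_set {..<K1 * K2}) (\<lambda>k.
           map_pmf (\<lambda>(u,v). (ys, ys, u, v)) (map_pmf (\<lambda>ws. (map fst ws, map snd ws)) (Wn W ys (cb ys ! k)))))"
      by (simp only: bind_unif_pair[OF K1 K2])
    also have "\<dots> = map_pmf (\<lambda>(xs, ws). (xs, xs, map fst ws, map snd ws))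
             (bind_pmf (iid_pmf n px) (\<lambda>xs. map_pmf (Pair xs)
                (bind_pmf (pmf_of_set {..<K1 * K2}) (\<lambda>k. Wn W xs (cb xs ! k)))))"
      by (simp add: map_bind_pmf pmf.map_comp o_def)
    finally show ?thesis .
  qed
  show ?thesis
    apply (rule exI[of _ P1], rule exI[of _ P2], rule exI[of _ e1], rule exI[of _ e2], rule exI[of _ d1], rule exI[of _ d2])
    using law1 law2 out unfolding C_def W_def by (simp add: Let_def)
qed

lemma measure_cond:
  assumes ne: "set_pmf p \<inter> s \<noteq> {}"
  shows "measure_pmf.prob (cond_pmf p s) B = measure_pmf.prob p (s \<inter> B) / measure_pmf.prob p s"
  unfolding cond_pmf.rep_eq[OF ne]
  by (rule measure_uniform_measure)
     (auto simp: emeasure_measure_pmf_not_zero[OF ne] measure_pmf.emeasure_finite)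

lemma pmf_map_cond:
  assumes ne: "set_pmf p \<inter> s \<noteq> {}"
  shows "pmf (map_pmf h (cond_pmf p s)) v = measure_pmf.prob p (s \<inter> h -` {v}) / measure_pmf.prob p s"
  unfolding pmf_map by (rule measure_cond[OF ne])

lemma decomp_fst:
  fixes V :: "('a \<times> 'b) pmf"
  shows "bind_pmf (map_pmf fst V) (\<lambda>a. map_pmf (Pair a) (map_pmf snd (cond_pmf V {z. fst z = a}))) = V"
proof -
  have "bind_pmf (map_pmf fst V) (\<lambda>a. map_pmf (Pair a) (map_pmf snd (cond_pmf V {z. fst z = a})))
      = bind_pmf (map_pmf fst V) (\<lambda>a. cond_pmf V {z. fst z = a})"
  proof (rule pmf_eq_bind_cong)
    fix a assume a: "a \<in> set_pmf (map_pmf fst V)"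
    then have ne: "set_pmf V \<inter> {z. fst z = a} \<noteq> {}" by auto
    have "map_pmf (Pair a) (map_pmf snd (cond_pmf V {z. fst z = a})) = map_pmf id (cond_pmf V {z. fst z = a})"
      unfolding pmf.map_comp by (rule map_pmf_cong) (use ne in \<open>auto simp: set_cond_pmf\<close>)
    then show "map_pmf (Pair a) (map_pmf snd (cond_pmf V {z. fst z = a})) = cond_pmf V {z. fst z = a}"
      by simp
  qed
  also have "\<dots> = V"
  proof (rule bind_cond_pmf_cancel)
    fix x assume "x \<in> set_pmf (map_pmf fst V)"
    then show "set_pmf V \<inter> {y. fst y = x} \<noteq> {}" by auto
  next
    fix y assume "y \<in> set_pmf V"
    then show "set_pmf (map_pmf fst V) \<inter> {x. fst y = x} \<noteq> {}" by auto
  next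
    fix x :: 'a and y :: "'a \<times> 'b" assume "fst y = x"
    then show "measure_pmf.prob V {y. fst y = x} = measure_pmf.prob (map_pmf fst V) {x. fst y = x}"
      by (simp add: vimage_def eq_commute)
  qed
  finally show ?thesis .
qed

definition Vx :: "('x \<times> 'v \<times> 'w) pmf \<Rightarrow> 'x \<Rightarrow> ('v \<times> 'w) pmf" where
  "Vx T0 x = map_pmf snd (cond_pmf T0 {z. fst z = x})"
definition kap :: "('x \<times> 'v \<times> 'w) pmf \<Rightarrow> 'x \<Rightarrow> 'v pmf" where
  "kap T0 x = map_pmf fst (Vx T0 x)"
definition Wj :: "('x \<times> 'v \<times> 'w) pmf \<Rightarrow> 'x \<Rightarrow> 'v \<Rightarrow> 'w pmf" where
  "Wj T0 x f = map_pmf snd (cond_pmf (Vx T0 x) {z. fst z = f})"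

lemma joint3_decomp: "joint3 (map_pmf fst T0) (kap T0) (Wj T0) = T0"
proof -
  have "joint3 (map_pmf fst T0) (kap T0) (Wj T0) = bind_pmf (map_pmf fst T0) (\<lambda>x. map_pmf (Pair x) (Vx T0 x))"
    unfolding joint3_def
  proof (rule pmf_eq_bind_cong)
    fix x
    have "bind_pmf (kap T0 x) (\<lambda>f. map_pmf (\<lambda>w. (x, f, w)) (Wj T0 x f))
       = map_pmf (Pair x) (bind_pmf (map_pmf fst (Vx T0 x)) (\<lambda>f. map_pmf (Pair f) (map_pmf snd (cond_pmf (Vx T0 x) {z. fst z = f}))))"
      by (simp add: kap_def Wj_def map_bind_pmf pmf.map_comp o_def)
    also have "\<dots> = map_pmf (Pair x) (Vx T0 x)" by (simp only: decomp_fst)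
    finally show "bind_pmf (kap T0 x) (\<lambda>f. map_pmf (\<lambda>w. (x, f, w)) (Wj T0 x f)) = map_pmf (Pair x) (Vx T0 x)" .
  qed
  also have "\<dots> = T0" unfolding Vx_def by (rule decomp_fst)
  finally show ?thesis .
qed

lemma bind_kap_Wj: "bind_pmf (kap T0 x) (Wj T0 x) = map_pmf snd (Vx T0 x)"
proof -
  have "bind_pmf (kap T0 x) (Wj T0 x) = map_pmf snd (bind_pmf (map_pmf fst (Vx T0 x)) (\<lambda>f. map_pmf (Pair f) (map_pmf snd (cond_pmf (Vx T0 x) {z. fst z = f}))))"
    by (simp add: kap_def Wj_def[abs_def] map_bind_pmf pmf.map_comp o_def)
  also have "\<dots> = map_pmf snd (Vx T0 x)" by (simp only: decomp_fst)
  finally show ?thesis .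
qed

lemma measure_Vx:
  assumes ne: "\<exists>z\<in>set_pmf T0. fst z = x"
  shows "measure_pmf.prob (Vx T0 x) A = measure_pmf.prob T0 {z. fst z = x \<and> snd z \<in> A} / measure_pmf.prob T0 {z. fst z = x}"
proof -
  have ne': "set_pmf T0 \<inter> {z. fst z = x} \<noteq> {}" using ne by auto
  show ?thesis unfolding Vx_def measure_map_pmf measure_cond[OF ne']
    by (simp add: Int_def vimage_def conj_commute)
qed

lemma pmf_map_Wj:
  assumes ne: "\<exists>z\<in>set_pmf T0. fst z = x \<and> fst (snd z) = f"
  shows "pmf (map_pmf h (Wj T0 x f)) u =
    measure_pmf.prob T0 {z. fst z = x \<and> fst (snd z) = f \<and> h (snd (snd z)) = u} /
    measure_pmf.prob T0 {z. fst z = x \<and> fst (snd z) = f}"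
proof -
  have neX: "\<exists>z\<in>set_pmf T0. fst z = x" using ne by auto
  have neF: "set_pmf (Vx T0 x) \<inter> {z. fst z = f} \<noteq> {}"
  proof -
    obtain z where z: "z \<in> set_pmf T0" "fst z = x" "fst (snd z) = f" using ne by auto
    have ne': "set_pmf T0 \<inter> {z. fst z = x} \<noteq> {}" using z by auto
    have "z \<in> set_pmf (cond_pmf T0 {z. fst z = x})" using z set_cond_pmf[OF ne'] by auto
    then have "snd z \<in> set_pmf (Vx T0 x)" by (simp add: Vx_def)
    then show ?thesis using z by auto
  qed
  have pX: "measure_pmf.prob T0 {z. fst z = x} > 0"
    using neX by (auto intro: measure_pmf_posI)
  have "pmf (map_pmf h (Wj T0 x f)) u = measure_pmf.prob (Vx T0 x) ({z. fst z = f} \<inter> (h \<circ> snd) -` {u}) /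
          measure_pmf.prob (Vx T0 x) {z. fst z = f}"
    unfolding Wj_def pmf.map_comp by (rule pmf_map_cond[OF neF])
  also have "\<dots> = (measure_pmf.prob T0 {z. fst z = x \<and> fst (snd z) = f \<and> h (snd (snd z)) = u} / measure_pmf.prob T0 {z. fst z = x}) /
        (measure_pmf.prob T0 {z. fst z = x \<and> fst (snd z) = f} / measure_pmf.prob T0 {z. fst z = x})"
    unfolding measure_Vx[OF neX] by (simp add: conj_assoc)
  also have "\<dots> = measure_pmf.prob T0 {z. fst z = x \<and> fst (snd z) = f \<and> h (snd (snd z)) = u} /
    measure_pmf.prob T0 {z. fst z = x \<and> fst (snd z) = f}"
    using pX by (simp add: field_simps)
  finally show ?thesis .
qed

lemma pmf_snd_Vx:
  assumes ne: "\<exists>z\<in>set_pmf T0. fst z = x"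
  shows "pmf (map_pmf snd (Vx T0 x)) w =
    measure_pmf.prob T0 {z. fst z = x \<and> snd (snd z) = w} / measure_pmf.prob T0 {z. fst z = x}"
  unfolding pmf_map measure_Vx[OF ne] by (simp add: vimage_def)

definition T0of :: "('x \<times> 'y1 \<times> 'y2 \<times> 'f list) pmf \<Rightarrow> ('x \<times> 'f list \<times> ('y1 \<times> 'y2)) pmf" where
  "T0of P = map_pmf (\<lambda>(x, y1, y2, F). (x, F, (y1, y2))) P"

lemma measure_T0of: "measure_pmf.prob (T0of P) A = measure_pmf.prob P {w. (case w of (x, y1, y2, F) \<Rightarrow> (x, F, (y1, y2))) \<in> A}"
  unfolding T0of_def measure_map_pmf by (simp add: vimage_def)

lemma markov_Wj:
  fixes P :: "('x \<times> 'y1 \<times> 'y2 \<times> 'f list) pmf"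
  assumes mc: "markov_chain P (\<lambda>(x, y1, y2, F). y1) (\<lambda>(x, y1, y2, F). (F, x)) (\<lambda>(x, y1, y2, F). y2)"
    and ne: "\<exists>z\<in>set_pmf (T0of P). fst z = x \<and> fst (snd z) = f"
  shows "Wj (T0of P) x f = pair_pmf (map_pmf fst (Wj (T0of P) x f)) (map_pmf snd (Wj (T0of P) x f))"
proof (rule pmf_eqI)
  fix v :: "'y1 \<times> 'y2"
  obtain a c where v: "v = (a, c)" by (cases v)
  let ?T = "T0of P"
  define mF where "mF = measure_pmf.prob ?T {z. fst z = x \<and> fst (snd z) = f}"
  have mF_pos: "mF > 0" unfolding mF_def using ne by (auto intro: measure_pmf_posI)
  have eq1: "pmf (Wj ?T x f) (a, c) = measure_pmf.prob ?T {z. fst z = x \<and> fst (snd z) = f \<and> snd (snd z) = (a, c)} / mF"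
    using pmf_map_Wj[OF ne, of id "(a,c)"] by (simp add: mF_def)
  have eq2: "pmf (map_pmf fst (Wj ?T x f)) a = measure_pmf.prob ?T {z. fst z = x \<and> fst (snd z) = f \<and> fst (snd (snd z)) = a} / mF"
    using pmf_map_Wj[OF ne, of fst a] by (simp add: mF_def)
  have eq3: "pmf (map_pmf snd (Wj ?T x f)) c = measure_pmf.prob ?T {z. fst z = x \<and> fst (snd z) = f \<and> snd (snd (snd z)) = c} / mF"
    using pmf_map_Wj[OF ne, of snd c] by (simp add: mF_def)
  have mcabc: "measure_pmf.prob P {w. (\<lambda>(x, y1, y2, F). y1) w = a \<and> (\<lambda>(x, y1, y2, F). (F, x)) w = (f, x) \<and> (\<lambda>(x, y1, y2, F). y2) w = c} *
      measure_pmf.prob P {w. (\<lambda>(x, y1, y2, F). (F, x)) w = (f, x)}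
    = measure_pmf.prob P {w. (\<lambda>(x, y1, y2, F). y1) w = a \<and> (\<lambda>(x, y1, y2, F). (F, x)) w = (f, x)} *
      measure_pmf.prob P {w. (\<lambda>(x, y1, y2, F). (F, x)) w = (f, x) \<and> (\<lambda>(x, y1, y2, F). y2) w = c}"
    using mc unfolding markov_chain_def by blast
  have s1: "measure_pmf.prob ?T {z. fst z = x \<and> fst (snd z) = f \<and> snd (snd z) = (a, c)}
      = measure_pmf.prob P {w. (\<lambda>(x, y1, y2, F). y1) w = a \<and> (\<lambda>(x, y1, y2, F). (F, x)) w = (f, x) \<and> (\<lambda>(x, y1, y2, F). y2) w = c}"
    unfolding measure_T0of by (rule arg_cong[where f="measure_pmf.prob P"]) auto
  have s2: "mF = measure_pmf.prob P {w. (\<lambda>(x, y1, y2, F). (F, x)) w = (f, x)}"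
    unfolding mF_def measure_T0of by (rule arg_cong[where f="measure_pmf.prob P"]) auto
  have s3: "measure_pmf.prob ?T {z. fst z = x \<and> fst (snd z) = f \<and> fst (snd (snd z)) = a}
      = measure_pmf.prob P {w. (\<lambda>(x, y1, y2, F). y1) w = a \<and> (\<lambda>(x, y1, y2, F). (F, x)) w = (f, x)}"
    unfolding measure_T0of by (rule arg_cong[where f="measure_pmf.prob P"]) auto
  have s4: "measure_pmf.prob ?T {z. fst z = x \<and> fst (snd z) = f \<and> snd (snd (snd z)) = c}
      = measure_pmf.prob P {w. (\<lambda>(x, y1, y2, F). (F, x)) w = (f, x) \<and> (\<lambda>(x, y1, y2, F). y2) w = c}"
    unfolding measure_T0of by (rule arg_cong[where f="measure_pmf.prob P"]) auto
  show "pmf (Wj ?T x f) v = pmf (pair_pmf (map_pmf fst (Wj ?T x f)) (map_pmf snd (Wj ?T x f))) v"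
    unfolding v pmf_pair fst_conv snd_conv eq1 eq2 eq3 s1 s3 s4
    using mcabc mF_pos unfolding s2[symmetric]
    by (simp add: field_simps power2_eq_square)
qed

lemma measure_cong_supp:
  assumes "\<And>w. w \<in> set_pmf M \<Longrightarrow> w \<in> A \<longleftrightarrow> w \<in> B"
  shows "measure_pmf.prob M A = measure_pmf.prob M B"
proof -
  have "A \<inter> set_pmf M = B \<inter> set_pmf M" using assms by auto
  then show ?thesis by (metis measure_Int_set_pmf)
qed

lemma set_Vx:
  assumes "\<exists>z\<in>set_pmf T. fst z = x"
  shows "set_pmf (Vx T x) = snd ` {z\<in>set_pmf T. fst z = x}"
proof -
  have ne: "set_pmf T \<inter> {z. fst z = x} \<noteq> {}" using assms by auto
  show ?thesis unfolding Vx_def using set_cond_pmf[OF ne] by auto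
qed

lemma set_kap:
  assumes "\<exists>z\<in>set_pmf T. fst z = x" "f \<in> set_pmf (kap T x)"
  shows "\<exists>z\<in>set_pmf T. fst z = x \<and> fst (snd z) = f"
proof -
  have "f \<in> fst ` set_pmf (Vx T x)" using assms(2) by (simp add: kap_def)
  then show ?thesis unfolding set_Vx[OF assms(1)] by auto
qed

definition Wof :: "('x \<times> 'v \<times> ('y1 \<times> 'y2)) pmf \<Rightarrow> 'x \<Rightarrow> 'v \<Rightarrow> ('y1 \<times> 'y2) pmf" where
  "Wof T x f = pair_pmf (map_pmf fst (Wj T x f)) (map_pmf snd (Wj T x f))"

lemma W_eq_Wj:
  fixes P :: "('x \<times> 'y1 \<times> 'y2 \<times> 'f list) pmf"
  assumes mc: "markov_chain P (\<lambda>(x, y1, y2, F). y1) (\<lambda>(x, y1, y2, F). (F, x)) (\<lambda>(x, y1, y2, F). y2)"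
    and ne: "\<exists>z\<in>set_pmf (T0of P). fst z = x \<and> fst (snd z) = f"
  shows "Wof (T0of P) x f = Wj (T0of P) x f"
  unfolding Wof_def using markov_Wj[OF mc ne] by simp

lemma Wbar_eq:
  fixes P :: "('x \<times> 'y1 \<times> 'y2 \<times> 'f list) pmf"
  assumes mc: "markov_chain P (\<lambda>(x, y1, y2, F). y1) (\<lambda>(x, y1, y2, F). (F, x)) (\<lambda>(x, y1, y2, F). y2)"
    and ne: "\<exists>z\<in>set_pmf (T0of P). fst z = x"
  shows "bind_pmf (kap (T0of P) x) (Wof (T0of P) x) = map_pmf snd (Vx (T0of P) x)"
proof -
  have "bind_pmf (kap (T0of P) x) (Wof (T0of P) x) = bind_pmf (kap (T0of P) x) (Wj (T0of P) x)"
    by (rule pmf_eq_bind_cong) (use W_eq_Wj[OF mc] set_kap[OF ne] in auto)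
  then show ?thesis by (simp add: bind_kap_Wj)
qed

lemma joint3_T0:
  fixes P :: "('x \<times> 'y1 \<times> 'y2 \<times> 'f list) pmf"
  assumes mc: "markov_chain P (\<lambda>(x, y1, y2, F). y1) (\<lambda>(x, y1, y2, F). (F, x)) (\<lambda>(x, y1, y2, F). y2)"
  shows "joint3 (map_pmf fst (T0of P)) (kap (T0of P)) (Wof (T0of P)) = T0of P"
proof -
  have "joint3 (map_pmf fst (T0of P)) (kap (T0of P)) (Wof (T0of P)) = joint3 (map_pmf fst (T0of P)) (kap (T0of P)) (Wj (T0of P))"
    unfolding joint3_def
  proof (rule pmf_eq_bind_cong, rule pmf_eq_bind_cong)
    fix x f assume x: "x \<in> set_pmf (map_pmf fst (T0of P))" and f: "f \<in> set_pmf (kap (T0of P) x)"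
    have ne: "\<exists>z\<in>set_pmf (T0of P). fst z = x" using x by auto
    show "map_pmf (\<lambda>w. (x, f, w)) (Wof (T0of P) x f) = map_pmf (\<lambda>w. (x, f, w)) (Wj (T0of P) x f)"
      using W_eq_Wj[OF mc set_kap[OF ne f]] by simp
  qed
  then show ?thesis by (simp add: joint3_decomp)
qed

lemma cmi_eq:
  fixes P :: "('x \<times> 'y1 \<times> 'y2 \<times> 'f list) pmf" and fa fb fc
  assumes fin: "finite (set_pmf P)" and len: "\<forall>(x, y1, y2, F)\<in>set_pmf P. length F = r"
    and mc: "markov_chain P (\<lambda>(x, y1, y2, F). y1) (\<lambda>(x, y1, y2, F). (F, x)) (\<lambda>(x, y1, y2, F). y2)"
    and fa: "fa = (\<lambda>(x, y1, y2, F). (y1, y2))" and fb: "fb = (\<lambda>(x, y1, y2, F). take r F)"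
    and fc: "fc = (\<lambda>(x::'x, y1::'y1, y2::'y2, F::'f list). x)"
  shows "cond_mutual_info P fa fb fc = measure_pmf.expectation (T0of P)
     (\<lambda>(x, f, w). log 2 (pmf (Wof (T0of P) x f) w / pmf (bind_pmf (kap (T0of P) x) (Wof (T0of P) x)) w))"
proof -
  let ?T = "T0of P"
  define \<sigma> :: "'x \<times> 'f list \<times> ('y1 \<times> 'y2) \<Rightarrow> ('y1 \<times> 'y2) \<times> 'f list \<times> 'x" where "\<sigma> = (\<lambda>(x, f, w). (w, f, x))"
  define g where "g = (\<lambda>(x, f, w). log 2 (pmf (Wof ?T x f) w / pmf (bind_pmf (kap ?T x) (Wof ?T x)) w))"
  have inj: "inj \<sigma>" by (auto simp: \<sigma>_def inj_def)
  have finT: "finite (set_pmf ?T)" using fin by (simp add: T0of_def)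
  have M3: "map_pmf (\<lambda>w. (fa w, fb w, fc w)) P = map_pmf \<sigma> ?T"
    unfolding T0of_def pmf.map_comp
    by (rule map_pmf_cong) (use len in \<open>auto simp: fa fb fc \<sigma>_def\<close>)
  define G where "G = (\<lambda>(a, b, c).
       pmf (map_pmf (\<lambda>w. (fa w, fb w, fc w)) P) (a, b, c) *
       log 2 (pmf (map_pmf (\<lambda>w. (fa w, fb w, fc w)) P) (a, b, c) * pmf (map_pmf fc P) c
              / (pmf (map_pmf (\<lambda>w. (fa w, fc w)) P) (a, c) * pmf (map_pmf (\<lambda>w. (fb w, fc w)) P) (b, c))))"
  have "cond_mutual_info P fa fb fc = sum G (set_pmf (map_pmf \<sigma> ?T))"
    unfolding cond_mutual_info_def G_def M3[symmetric] ..
  also have "\<dots> = sum (G \<circ> \<sigma>) (set_pmf ?T)"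
    by (simp add: sum.reindex[OF inj_on_subset[OF inj subset_UNIV]])
  also have "\<dots> = (\<Sum>z\<in>set_pmf ?T. pmf ?T z * g z)"
  proof (rule sum.cong[OF refl])
    fix z assume z: "z \<in> set_pmf ?T"
    obtain x f w where zz: "z = (x, f, w)" by (cases z) auto
    let ?m = "measure_pmf.prob ?T"
    have neX: "\<exists>z\<in>set_pmf ?T. fst z = x" using z zz by (intro bexI[of _ z]) auto
    have neXF: "\<exists>z\<in>set_pmf ?T. fst z = x \<and> fst (snd z) = f" using z zz by (intro bexI[of _ z]) auto
    have pT: "pmf ?T (x, f, w) = ?m {z. fst z = x \<and> fst (snd z) = f \<and> snd (snd z) = w}"
    proof -
      have "{z. fst z = x \<and> fst (snd z) = f \<and> snd (snd z) = w} = {(x, f, w)}" by auto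
      then show ?thesis by (simp add: measure_pmf_single)
    qed
    have p3: "pmf (map_pmf (\<lambda>w. (fa w, fb w, fc w)) P) (w, f, x) = pmf ?T (x, f, w)"
      unfolding M3 using pmf_map_inj'[OF inj, of ?T "(x,f,w)"] by (simp add: \<sigma>_def)
    have pc: "pmf (map_pmf fc P) x = ?m {z. fst z = x}"
      unfolding pmf_map measure_T0of by (rule arg_cong[where f="measure_pmf.prob P"]) (auto simp: fc)
    have pac: "pmf (map_pmf (\<lambda>w. (fa w, fc w)) P) (w, x) = ?m {z. fst z = x \<and> snd (snd z) = w}"
      unfolding pmf_map measure_T0of by (rule arg_cong[where f="measure_pmf.prob P"]) (auto simp: fa fc)
    have pbc: "pmf (map_pmf (\<lambda>w. (fb w, fc w)) P) (f, x) = ?m {z. fst z = x \<and> fst (snd z) = f}"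
      unfolding pmf_map measure_T0of by (rule measure_cong_supp) (use len in \<open>auto simp: fb fc\<close>)
    have pW: "pmf (Wof ?T x f) w = ?m {z. fst z = x \<and> fst (snd z) = f \<and> snd (snd z) = w} / ?m {z. fst z = x \<and> fst (snd z) = f}"
      using W_eq_Wj[OF mc neXF] pmf_map_Wj[OF neXF, of id w] by simp
    have pWb: "pmf (bind_pmf (kap ?T x) (Wof ?T x)) w = ?m {z. fst z = x \<and> snd (snd z) = w} / ?m {z. fst z = x}"
      unfolding Wbar_eq[OF mc neX] by (rule pmf_snd_Vx[OF neX])
    have pos1: "?m {z. fst z = x} > 0" using z zz by (auto intro!: measure_pmf_posI)
    have pos2: "?m {z. fst z = x \<and> fst (snd z) = f} > 0" using z zz by (auto intro!: measure_pmf_posI)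
    have pos3: "?m {z. fst z = x \<and> snd (snd z) = w} > 0" using z zz by (auto intro!: measure_pmf_posI)
    have pos4: "pmf ?T (x, f, w) > 0" using z zz by (simp add: pmf_positive)
    show "(G \<circ> \<sigma>) z = pmf ?T z * g z"
      unfolding zz o_def \<sigma>_def G_def g_def
      using pos1 pos2 pos3 pos4
      by (simp add: p3 pc pac pbc pW pWb pT[symmetric] field_simps)
  qed
  also have "\<dots> = measure_pmf.expectation ?T g"
    by (subst integral_measure_pmf[OF finT]) auto
  finally show ?thesis by (simp add: g_def)
qed

lemma fin_bounded_lists:
  fixes M :: "('a::finite list \<times> 'b::finite list) pmf"
  assumes "\<And>xs ws. (xs, ws) \<in> set_pmf M \<Longrightarrow> length xs \<le> n \<and> length ws \<le> n"
  shows "finite (set_pmf M)"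
proof -
  have "set_pmf M \<subseteq> {xs. set xs \<subseteq> UNIV \<and> length xs \<le> n} \<times> {ws. set ws \<subseteq> UNIV \<and> length ws \<le> n}"
    using assms by auto
  moreover have "finite ({xs::'a list. set xs \<subseteq> UNIV \<and> length xs \<le> n} \<times> {ws::'b list. set ws \<subseteq> UNIV \<and> length ws \<le> n})"
    by (intro finite_cartesian_product finite_lists_length_le) auto
  ultimately show ?thesis by (rule finite_subset)
qed

lemma zip3_proj:
  "length fs = length xs \<Longrightarrow> length ws = length xs \<Longrightarrow>
   (\<lambda>zs. (map (\<lambda>(a,b,c,d). a) zs, map (\<lambda>(a,b,c,d). b) zs, map (\<lambda>(a,b,c,d). c) zs, map (\<lambda>(a,b,c,d). d) zs))
     (map (\<lambda>(x, f, w). (x, x, fst w, snd w)) (zip xs (zip fs ws))) = (xs, xs, map fst ws, map snd ws)"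
proof (induction xs arbitrary: fs ws)
  case Nil
  then show ?case by simp
next
  case (Cons x xs)
  then obtain f fs' w ws' where "fs = f # fs'" "ws = w # ws'"
    by (cases fs; cases ws) auto
  then show ?case using Cons by (cases w) auto
qed

lemma floor_half:
  fixes y :: real
  assumes "y \<ge> 1"
  shows "real (nat \<lfloor>y\<rfloor>) \<ge> y / 2"
proof (cases "y \<ge> 2")
  case True
  have "real_of_int \<lfloor>y\<rfloor> > y - 1" by linarith
  moreover have "real (nat \<lfloor>y\<rfloor>) = real_of_int \<lfloor>y\<rfloor>" using assms by simp
  ultimately show ?thesis using True by linarith
next
  case False
  have "\<lfloor>y\<rfloor> \<ge> 1" using assms by linarith
  then have "real (nat \<lfloor>y\<rfloor>) \<ge> 1" by linarith
  then show ?thesis using False by linarith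
qed

lemma powr_neg_bound:
  fixes y :: real
  assumes "y > 0"
  shows "2 powr (- y) \<le> 1 / (y * ln 2)"
proof -
  have l2: "ln 2 > (0::real)" by simp
  have "2 powr y = exp (y * ln 2)" by (simp add: powr_def mult.commute)
  also have "\<dots> \<ge> 1 + y * ln 2" by (rule exp_ge_add_one_self)
  finally have "2 powr y \<ge> y * ln 2" by linarith
  moreover have "y * ln 2 > 0" using assms l2 by simp
  ultimately have "1 / 2 powr y \<le> 1 / (y * ln 2)" by (intro divide_left_mono) auto
  then show ?thesis by (simp add: powr_minus_divide)
qed

theorem theorem4:
  fixes q :: "('x::finite \<times> 'x \<times> 'y1::finite \<times> 'y2::finite) pmf"
    and P :: "('x \<times> 'y1 \<times> 'y2 \<times> 'f::finite list) pmf"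
    and r :: nat and R :: "nat \<Rightarrow> real"
  assumes "\<forall>(a, b, c, d)\<in>set_pmf q. a = b"
    and "r \<ge> 1"
    and "\<forall>(x, y1, y2, F)\<in>set_pmf P. length F = r"
    and "map_pmf (\<lambda>(x, y1, y2, F). (x, y1, y2)) P = map_pmf (\<lambda>(a, b, c, d). (a, c, d)) q"
    and "markov_chain P (\<lambda>(x, y1, y2, F). y1) (\<lambda>(x, y1, y2, F). (F, x)) (\<lambda>(x, y1, y2, F). y2)"
    and "\<forall>i\<in>{1..r}. R i > 0"
    and "\<forall>s\<in>{1..r}. (\<Sum>i=1..s. R i) >
           cond_mutual_info P (\<lambda>(x, y1, y2, F). (y1, y2)) (\<lambda>(x, y1, y2, F). take s F) (\<lambda>(x, y1, y2, F). x)"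
  shows "admissible 2 q (\<Sum>i\<in>{i\<in>{1..r}. odd i}. R i) (\<Sum>i\<in>{i\<in>{1..r}. even i}. R i)"
proof -
  define T where "T = T0of P"
  define px where "px = map_pmf fst T"
  define \<kappa> where "\<kappa> = kap T"
  define W where "W = Wof T"
  define W1 where "W1 = (\<lambda>x f. map_pmf fst (Wj T x f))"
  define W2 where "W2 = (\<lambda>x f. map_pmf snd (Wj T x f))"
  have WW: "(\<lambda>x f. pair_pmf (W1 x f) (W2 x f)) = W"
    by (simp add: W_def W1_def W2_def Wof_def[abs_def])
  define g where "g = (\<lambda>(x, f, w). log 2 (pmf (W x f) w / pmf (bind_pmf (\<kappa> x) (W x)) w))"
  define I where "I = cond_mutual_info P (\<lambda>(x, y1, y2, F). (y1, y2)) (\<lambda>(x, y1, y2, F). take r F) (\<lambda>(x, y1, y2, F). x)"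
  have finP: "finite (set_pmf P)"
  proof -
    have "set_pmf P \<subseteq> UNIV \<times> UNIV \<times> UNIV \<times> {F. set F \<subseteq> UNIV \<and> length F = r}"
      using assms(3) by auto
    moreover have "finite (UNIV \<times> UNIV \<times> UNIV \<times> {F::'f list. set F \<subseteq> UNIV \<and> length F = r} :: ('x \<times> 'y1 \<times> 'y2 \<times> 'f list) set)"
      by (intro finite_cartesian_product finite_lists_length_eq) auto
    ultimately show ?thesis by (rule finite_subset)
  qed
  have finT: "finite (set_pmf T)" using finP by (simp add: T_def T0of_def)
  have fpx: "finite (set_pmf px)" using finT by (simp add: px_def)
  have fk: "finite (set_pmf (\<kappa> x))" if "x \<in> set_pmf px" for x
  proof -
    have ne: "\<exists>z\<in>set_pmf T. fst z = x" using that by (auto simp: px_def)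
    have "set_pmf (\<kappa> x) = fst ` set_pmf (Vx T x)" by (simp add: \<kappa>_def kap_def)
    also have "\<dots> = fst ` snd ` {z\<in>set_pmf T. fst z = x}" by (simp add: set_Vx[OF ne])
    finally show ?thesis using finT by simp
  qed
  have fW: "finite (set_pmf (W x f))" for x f
    by (rule finite_subset[OF subset_UNIV]) simp
  have fW': "\<And>x f. x \<in> set_pmf px \<Longrightarrow> f \<in> set_pmf (\<kappa> x) \<Longrightarrow> finite (set_pmf (W x f))"
    using fW by blast
  have jT: "joint3 px \<kappa> W = T"
    unfolding px_def \<kappa>_def W_def T_def by (rule joint3_T0[OF assms(5)])
  have IE: "I = measure_pmf.expectation T g"
    unfolding I_def g_def T_def W_def \<kappa>_def by (rule cmi_eq[OF finP assms(3) assms(5) refl refl refl])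
  have qT: "q = map_pmf (\<lambda>(x, f, w). (x, x, fst w, snd w)) T"
  proof -
    have "q = map_pmf (\<lambda>(a, c, d). (a, a, c, d)) (map_pmf (\<lambda>(a, b, c, d). (a, c, d)) q)"
      unfolding pmf.map_comp by (subst map_pmf_cong[where g=id]) (use assms(1) in auto)
    also have "\<dots> = map_pmf (\<lambda>(a, c, d). (a, a, c, d)) (map_pmf (\<lambda>(x, y1, y2, F). (x, y1, y2)) P)"
      by (simp only: assms(4))
    also have "\<dots> = map_pmf (\<lambda>(x, f, w). (x, x, fst w, snd w)) T"
      unfolding T_def T0of_def pmf.map_comp by (rule map_pmf_cong) auto
    finally show ?thesis .
  qed
  have qx: "map_pmf (\<lambda>(a,b,c,d). (a,b)) q = map_pmf (\<lambda>x. (x,x)) px"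
    unfolding qT px_def pmf.map_comp by (rule map_pmf_cong) auto
  have Tgt: "map_pmf (\<lambda>zs. (map (\<lambda>(a,b,c,d). a) zs, map (\<lambda>(a,b,c,d). b) zs, map (\<lambda>(a,b,c,d). c) zs, map (\<lambda>(a,b,c,d). d) zs)) (iid_pmf n q)
     = map_pmf (\<lambda>(xs, ws). (xs, xs, map fst ws, map snd ws))
         (bind_pmf (iid_pmf n px) (\<lambda>xs. map_pmf (Pair xs) (plist (map (\<lambda>x. bind_pmf (\<kappa> x) (W x)) xs))))" for n
  proof -
    let ?\<Psi> = "\<lambda>zs. (map (\<lambda>(a,b,c,d). a) zs, map (\<lambda>(a,b,c,d). b) zs, map (\<lambda>(a,b,c,d). c) zs, map (\<lambda>(a::'x,b::'x,c::'y1,d::'y2). d) zs)"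
    have "map_pmf ?\<Psi> (iid_pmf n q) = map_pmf (\<lambda>zs. ?\<Psi> (map (\<lambda>(x, f, w). (x, x, fst w, snd w)) zs)) (iid_pmf n (joint3 px \<kappa> W))"
      unfolding qT iid_map jT pmf.map_comp o_def ..
    also have "\<dots> = bind_pmf (iid_pmf n px) (\<lambda>xs. bind_pmf (plist (map \<kappa> xs))
        (\<lambda>fs. map_pmf (\<lambda>ws. ?\<Psi> (map (\<lambda>(x, f, w). (x, x, fst w, snd w)) (zip xs (zip fs ws)))) (Wn W xs fs)))"
      unfolding iid_joint3 by (simp add: map_bind_pmf pmf.map_comp o_def)
    also have "\<dots> = bind_pmf (iid_pmf n px) (\<lambda>xs. bind_pmf (plist (map \<kappa> xs))
        (\<lambda>fs. map_pmf (\<lambda>ws. (xs, xs, map fst ws, map snd ws)) (Wn W xs fs)))"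
    proof (rule pmf_eq_bind_cong, rule pmf_eq_bind_cong, rule map_pmf_cong[OF refl])
      fix xs fs ws assume fs: "fs \<in> set_pmf (plist (map \<kappa> xs))" and ws: "ws \<in> set_pmf (Wn W xs fs)"
      have lf: "length fs = length xs" using length_plist[OF fs] by simp
      have lw: "length ws = length xs" using length_plist[OF ws[unfolded Wn_def]] lf by simp
      show "?\<Psi> (map (\<lambda>(x, f, w). (x, x, fst w, snd w)) (zip xs (zip fs ws))) = (xs, xs, map fst ws, map snd ws)"
        by (rule zip3_proj[OF lf lw])
    qed
    also have "\<dots> = bind_pmf (iid_pmf n px) (\<lambda>xs. map_pmf (\<lambda>ws. (xs, xs, map fst ws, map snd ws))
        (bind_pmf (plist (map \<kappa> xs)) (Wn W xs)))"
      by (simp add: map_bind_pmf)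
    also have "\<dots> = map_pmf (\<lambda>(xs, ws). (xs, xs, map fst ws, map snd ws))
         (bind_pmf (iid_pmf n px) (\<lambda>xs. map_pmf (Pair xs) (plist (map (\<lambda>x. bind_pmf (\<kappa> x) (W x)) xs))))"
      by (simp add: bind_Wn map_bind_pmf pmf.map_comp o_def)
    finally show ?thesis .
  qed
  define R12 where "R12 = (\<Sum>i\<in>{i\<in>{1..r}. odd i}. R i)"
  define R21 where "R21 = (\<Sum>i\<in>{i\<in>{1..r}. even i}. R i)"
  have R12pos: "R12 \<ge> 0" unfolding R12_def using assms(6) by (intro sum_nonneg) (auto intro: less_imp_le)
  have R21pos: "R21 \<ge> 0" unfolding R21_def using assms(6) by (intro sum_nonneg) (auto intro: less_imp_le)
  have Rsum: "R12 + R21 = (\<Sum>i=1..r. R i)"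
  proof -
    have "(\<Sum>i=1..r. R i) = (\<Sum>i\<in>{i\<in>{1..r}. odd i} \<union> {i\<in>{1..r}. even i}. R i)"
      by (rule sum.cong) auto
    also have "\<dots> = R12 + R21" unfolding R12_def R21_def by (rule sum.union_disjoint) auto
    finally show ?thesis by simp
  qed
  have IR: "I < R12 + R21"
    using assms(7) assms(2) unfolding Rsum I_def by auto
  define \<delta> where "\<delta> = (R12 + R21 - I) / 3"
  have \<delta>: "\<delta> > 0" using IR by (simp add: \<delta>_def)
  define V where "V = measure_pmf.expectation T (\<lambda>z. (g z - I)^2)"
  have V0: "V \<ge> 0" unfolding V_def by simp
  define c where "c = 2 / (\<delta> * ln 2) + 2 * V / \<delta>^2"
  have c0: "c \<ge> 0" unfolding c_def using \<delta> V0 by (simp add: ln_gt_zero)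
  have main: "\<exists>(P1::nat pmf) (P2::nat pmf)
        (e1::nat \<Rightarrow> 'x list \<Rightarrow> nat \<Rightarrow> nat list \<Rightarrow> nat) (e2::nat \<Rightarrow> 'x list \<Rightarrow> nat \<Rightarrow> nat list \<Rightarrow> nat)
        (d1::'x list \<Rightarrow> nat \<Rightarrow> nat list \<Rightarrow> 'y1 list) (d2::'x list \<Rightarrow> nat \<Rightarrow> nat list \<Rightarrow> 'y2 list).
      let J = code_space n q P1 P2;
          C = (\<lambda>(xs, m1, m2). messages e1 e2 (map fst xs) (map snd xs) m1 m2 2);
          msg_law = (\<lambda>i. map_pmf (\<lambda>w. C w ! (i - 1)) J)
      in (\<Sum>i\<in>{i\<in>{1..2}. odd i}. entropy_pmf (msg_law i)) \<le> ennreal (real n * R12)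
       \<and> (\<Sum>i\<in>{i\<in>{1..2}. even i}. entropy_pmf (msg_law i)) \<le> ennreal (real n * R21)
       \<and> tv_dist
           (map_pmf (\<lambda>(xs, m1, m2). (map fst xs, map snd xs,
                  d1 (map fst xs) m1 (C (xs, m1, m2)), d2 (map snd xs) m2 (C (xs, m1, m2)))) J)
           (map_pmf (\<lambda>zs. (map (\<lambda>(a,b,c,d). a) zs, map (\<lambda>(a,b,c,d). b) zs,
                            map (\<lambda>(a,b,c,d). c) zs, map (\<lambda>(a,b,c,d). d) zs)) (iid_pmf n q))
         \<le> ennreal (c / n)" if n1: "n \<ge> 1" for n
  proof -
    define y1 where "y1 = 2 powr (real n * R12)"
    define y2 where "y2 = 2 powr (real n * R21)"
    have y1: "y1 \<ge> 1" unfolding y1_def using R12pos by (intro ge_one_powr_ge_zero) auto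
    have y2: "y2 \<ge> 1" unfolding y2_def using R21pos by (intro ge_one_powr_ge_zero) auto
    define K1 where "K1 = nat \<lfloor>y1\<rfloor>"
    define K2 where "K2 = nat \<lfloor>y2\<rfloor>"
    have K1: "K1 > 0" unfolding K1_def using y1 by linarith
    have K2: "K2 > 0" unfolding K2_def using y2 by linarith
    have K1le: "real K1 \<le> y1" unfolding K1_def using y1 by linarith
    have K2le: "real K2 \<le> y2" unfolding K2_def using y2 by linarith
    have K1ge: "real K1 \<ge> y1 / 2" unfolding K1_def by (rule floor_half[OF y1])
    have K2ge: "real K2 \<ge> y2 / 2" unfolding K2_def by (rule floor_half[OF y2])
    have logK1: "log 2 K1 \<le> real n * R12"
    proof -
      have "log 2 K1 \<le> log 2 y1" using K1 K1le by (intro log_mono) auto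
      then show ?thesis by (simp add: y1_def)
    qed
    have logK2: "log 2 K2 \<le> real n * R21"
    proof -
      have "log 2 K2 \<le> log 2 y2" using K2 K2le by (intro log_mono) auto
      then show ?thesis by (simp add: y2_def)
    qed
    define K where "K = K1 * K2"
    have K: "K > 0" using K1 K2 by (simp add: K_def)
    define t where "t = 2 powr (real n * (I + \<delta>))"
    have t: "t > 0" by (simp add: t_def)
    obtain cb where cbk: "\<forall>xs\<in>set_pmf (iid_pmf n px). \<forall>k<K. cb xs ! k \<in> set_pmf (plist (map \<kappa> xs))"
      and cbtv: "tv_dist (bind_pmf (iid_pmf n px) (\<lambda>xs. map_pmf (Pair xs) (bind_pmf (pmf_of_set {..<K}) (\<lambda>k. Wn W xs (cb xs ! k)))))
            (bind_pmf (iid_pmf n px) (\<lambda>xs. map_pmf (Pair xs) (plist (map (\<lambda>x. bind_pmf (\<kappa> x) (W x)) xs))))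
        \<le> ennreal (sqrt (t / K) + 2 * measure_pmf.prob (iid_pmf n (joint3 px \<kappa> W)) {zs. (\<Sum>z\<leftarrow>zs. g z) > log 2 t})"
      using coding[where px=px and \<kappa>=\<kappa> and W=W and n=n and K=K and t=t, OF fpx fk fW' K t] unfolding g_def by blast
    obtain P1 P2 e1 e2 d1 d2 where prot: "let J = code_space n q P1 P2;
          C = (\<lambda>(xs, m1, m2). messages e1 e2 (map fst xs) (map snd xs) m1 m2 2);
          msg_law = (\<lambda>i. map_pmf (\<lambda>w. C w ! (i - 1)) J)
      in msg_law 1 = pmf_of_set {..<K1} \<and> msg_law 2 = pmf_of_set {..<K2}
       \<and> map_pmf (\<lambda>(xs, m1, m2). (map fst xs, map snd xs,
                  d1 (map fst xs) m1 (C (xs, m1, m2)), d2 (map snd xs) m2 (C (xs, m1, m2)))) J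
         = map_pmf (\<lambda>(xs, ws). (xs, xs, map fst ws, map snd ws))
             (bind_pmf (iid_pmf n px) (\<lambda>xs. map_pmf (Pair xs)
                (bind_pmf (pmf_of_set {..<K1 * K2}) (\<lambda>k. Wn (\<lambda>x f. pair_pmf (W1 x f) (W2 x f)) xs (cb xs ! k)))))"
      using protocol[where n=n and cb=cb and ?W1.0=W1 and ?W2.0=W2 and q=q and px=px and \<kappa>=\<kappa> and ?K1.0=K1 and ?K2.0=K2, OF qx fpx fk K1 K2] cbk unfolding K_def by blast
    have n0: "real n > 0" using n1 by simp
    have b1: "sqrt (t / K) \<le> 2 / (real n * \<delta> * ln 2)"
    proof -
      have Kge: "real K \<ge> y1 * y2 / 4"
      proof -
        have "(y1 / 2) * (y2 / 2) \<le> real K1 * real K2"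
          using K1ge K2ge y1 y2 by (intro mult_mono) auto
        then show ?thesis by (simp add: K_def)
      qed
      have y12: "y1 * y2 = 2 powr (real n * (I + 3 * \<delta>))"
      proof -
        have "real n * R12 + real n * R21 = real n * (I + 3 * \<delta>)" by (simp add: \<delta>_def field_simps)
        then show ?thesis unfolding y1_def y2_def by (simp add: powr_add[symmetric])
      qed
      have "t / K \<le> t / (y1 * y2 / 4)"
        using Kge t y1 y2 K by (intro divide_left_mono) auto
      also have "\<dots> = 4 * (2 powr (real n * (I + \<delta>)) / 2 powr (real n * (I + 3 * \<delta>)))"
        unfolding y12 t_def by simp
      also have "\<dots> = 4 * 2 powr (- (2 * (real n * \<delta>)))"
      proof -
        have e: "real n * (I + \<delta>) - real n * (I + 3 * \<delta>) = - (2 * (real n * \<delta>))" by (simp add: algebra_simps)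
        show ?thesis by (simp only: powr_diff[symmetric] e)
      qed
      also have "\<dots> = (2 * 2 powr (- (real n * \<delta>)))^2"
      proof -
        have h: "2 powr (- (2 * (real n * \<delta>))) = 2 powr (- (real n * \<delta>)) * 2 powr (- (real n * \<delta>))"
        proof -
          have "2 powr (- (real n * \<delta>)) * 2 powr (- (real n * \<delta>)) = (2::real) powr (- (real n * \<delta>) + - (real n * \<delta>))"
            by (rule powr_add[symmetric])
          also have "- (real n * \<delta>) + - (real n * \<delta>) = - (2 * (real n * \<delta>))" by simp
          finally show ?thesis by simp
        qed
        have alg: "4 * (a * a) = (2 * a)^2" for a :: real by (simp add: power2_eq_square)
        show ?thesis unfolding h by (rule alg)
      qed
      finally have "sqrt (t / K) \<le> sqrt ((2 * 2 powr (- (real n * \<delta>)))^2)"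
        by (rule real_sqrt_le_mono)
      also have "\<dots> = 2 * 2 powr (- (real n * \<delta>))" by (rule trans[OF real_sqrt_abs]) simp
      also have "\<dots> \<le> 2 * (1 / (real n * \<delta> * ln 2))"
        using powr_neg_bound[of "real n * \<delta>"] n0 \<delta> by simp
      finally show ?thesis by simp
    qed
    have b2: "measure_pmf.prob (iid_pmf n (joint3 px \<kappa> W)) {zs. (\<Sum>z\<leftarrow>zs. g z) > log 2 t} \<le> V / (real n * \<delta>^2)"
    proof -
      have lt: "log 2 t = real n * (I + \<delta>)" unfolding t_def by simp
      have "measure_pmf.prob (iid_pmf n (joint3 px \<kappa> W)) {zs. (\<Sum>z\<leftarrow>zs. g z) > log 2 t}
          \<le> measure_pmf.prob (iid_pmf n T) {zs. (\<Sum>z\<leftarrow>zs. g z) \<ge> real n * (measure_pmf.expectation T g + \<delta>)}"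
        unfolding jT lt IE[symmetric] by (rule measure_pmf.finite_measure_mono) auto
      also have "\<dots> \<le> measure_pmf.expectation T (\<lambda>z. (g z - measure_pmf.expectation T g)^2) / (real n * \<delta>^2)"
        using iid_lln[OF finT \<delta>, where n=n and g=g] n1 by simp
      finally show ?thesis unfolding IE[symmetric] V_def .
    qed
    have bound: "sqrt (t / K) + 2 * measure_pmf.prob (iid_pmf n (joint3 px \<kappa> W)) {zs. (\<Sum>z\<leftarrow>zs. g z) > log 2 t} \<le> c / n"
    proof -
      have "sqrt (t / K) + 2 * measure_pmf.prob (iid_pmf n (joint3 px \<kappa> W)) {zs. (\<Sum>z\<leftarrow>zs. g z) > log 2 t}
          \<le> 2 / (real n * \<delta> * ln 2) + 2 * (V / (real n * \<delta>^2))"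
        using b1 b2 by linarith
      also have "\<dots> = c / n" unfolding c_def using n0 \<delta> by (simp add: field_simps)
      finally show ?thesis .
    qed
    have set1: "{i\<in>{1..2::nat}. odd i} = {1}" by (auto simp: le_Suc_eq numeral_2_eq_2)
    have set2: "{i\<in>{1..2::nat}. even i} = {2}" by (auto simp: le_Suc_eq numeral_2_eq_2)
    have lenW: "length ws \<le> length xs" if "ws \<in> set_pmf (Wn W xs fs)" for ws xs fs
      using length_plist[OF that[unfolded Wn_def]] by simp
    have lenI: "length xs = n" if "xs \<in> set_pmf (iid_pmf n px)" for xs
      using that by (simp add: iid_plist length_plist)
    define A where "A = bind_pmf (iid_pmf n px) (\<lambda>xs. map_pmf (Pair xs) (bind_pmf (pmf_of_set {..<K}) (\<lambda>k. Wn W xs (cb xs ! k))))"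
    define B where "B = bind_pmf (iid_pmf n px) (\<lambda>xs. map_pmf (Pair xs) (plist (map (\<lambda>x. bind_pmf (\<kappa> x) (W x)) xs)))"
    have finA: "finite (set_pmf A)"
      unfolding A_def
      by (rule fin_bounded_lists[where n=n]) (auto dest!: lenW lenI)
    have finB: "finite (set_pmf B)"
      unfolding B_def
      by (rule fin_bounded_lists[where n=n]) (auto dest!: length_plist lenI)
    have tvAB: "tv_dist (map_pmf (\<lambda>(xs, ws). (xs, xs, map fst ws, map snd ws)) A)
                        (map_pmf (\<lambda>(xs, ws). (xs, xs, map fst ws, map snd ws)) B) \<le> ennreal (c / n)"
    proof -
      have "tv_dist (map_pmf (\<lambda>(xs, ws). (xs, xs, map fst ws, map snd ws)) A)
                        (map_pmf (\<lambda>(xs, ws). (xs, xs, map fst ws, map snd ws)) B) \<le> tv_dist A B"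
        by (rule tv_map_le[OF finA finB])
      also have "\<dots> \<le> ennreal (sqrt (t / K) + 2 * measure_pmf.prob (iid_pmf n (joint3 px \<kappa> W)) {zs. (\<Sum>z\<leftarrow>zs. g z) > log 2 t})"
        using cbtv unfolding A_def B_def .
      also have "\<dots> \<le> ennreal (c / n)" by (rule ennreal_leI[OF bound])
      finally show ?thesis .
    qed
    note prot' = prot[unfolded Let_def WW K_def[symmetric]]
    show ?thesis
      unfolding Let_def
    proof (rule exI[of _ P1], rule exI[of _ P2], rule exI[of _ e1], rule exI[of _ e2], rule exI[of _ d1], rule exI[of _ d2], intro conjI)
      show "(\<Sum>i\<in>{i\<in>{1..2}. odd i}. entropy_pmf (map_pmf (\<lambda>w. (case w of (xs, m1, m2) \<Rightarrow> messages e1 e2 (map fst xs) (map snd xs) m1 m2 2) ! (i - 1)) (code_space n q P1 P2))) \<le> ennreal (real n * R12)"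
        unfolding set1 using prot' logK1 by (simp add: entropy_unif[OF K1] ennreal_leI)
      show "(\<Sum>i\<in>{i\<in>{1..2}. even i}. entropy_pmf (map_pmf (\<lambda>w. (case w of (xs, m1, m2) \<Rightarrow> messages e1 e2 (map fst xs) (map snd xs) m1 m2 2) ! (i - 1)) (code_space n q P1 P2))) \<le> ennreal (real n * R21)"
        unfolding set2 using prot' logK2 by (simp add: entropy_unif[OF K2] ennreal_leI)
      show "tv_dist
           (map_pmf (\<lambda>(xs, m1, m2). (map fst xs, map snd xs,
                  d1 (map fst xs) m1 ((\<lambda>(xs, m1, m2). messages e1 e2 (map fst xs) (map snd xs) m1 m2 2) (xs, m1, m2)),
                  d2 (map snd xs) m2 ((\<lambda>(xs, m1, m2). messages e1 e2 (map fst xs) (map snd xs) m1 m2 2) (xs, m1, m2)))) (code_space n q P1 P2))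
           (map_pmf (\<lambda>zs. (map (\<lambda>(a,b,c,d). a) zs, map (\<lambda>(a,b,c,d). b) zs,
                            map (\<lambda>(a,b,c,d). c) zs, map (\<lambda>(a,b,c,d). d) zs)) (iid_pmf n q))
         \<le> ennreal (c / n)"
        using prot' tvAB unfolding Tgt A_def B_def by simp
    qed
  qed
  show ?thesis
    unfolding admissible_def
  proof (intro allI impI)
    fix \<epsilon> :: real assume \<epsilon>: "\<epsilon> > 0"
    define n0 where "n0 = nat \<lceil>c / \<epsilon>\<rceil> + 1"
    show "\<exists>n0. \<forall>n\<ge>n0. \<exists>(P1::nat pmf) (P2::nat pmf)
        (e1::nat \<Rightarrow> 'x list \<Rightarrow> nat \<Rightarrow> nat list \<Rightarrow> nat) (e2::nat \<Rightarrow> 'x list \<Rightarrow> nat \<Rightarrow> nat list \<Rightarrow> nat)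
        (d1::'x list \<Rightarrow> nat \<Rightarrow> nat list \<Rightarrow> 'y1 list) (d2::'x list \<Rightarrow> nat \<Rightarrow> nat list \<Rightarrow> 'y2 list).
      let J = code_space n q P1 P2;
          C = (\<lambda>(xs, m1, m2). messages e1 e2 (map fst xs) (map snd xs) m1 m2 2);
          msg_law = (\<lambda>i. map_pmf (\<lambda>w. C w ! (i - 1)) J)
      in (\<Sum>i\<in>{i\<in>{1..2}. odd i}. entropy_pmf (msg_law i)) \<le> ennreal (real n * (\<Sum>i\<in>{i\<in>{1..r}. odd i}. R i))
       \<and> (\<Sum>i\<in>{i\<in>{1..2}. even i}. entropy_pmf (msg_law i)) \<le> ennreal (real n * (\<Sum>i\<in>{i\<in>{1..r}. even i}. R i))
       \<and> tv_dist
           (map_pmf (\<lambda>(xs, m1, m2). (map fst xs, map snd xs,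
                  d1 (map fst xs) m1 (C (xs, m1, m2)), d2 (map snd xs) m2 (C (xs, m1, m2)))) J)
           (map_pmf (\<lambda>zs. (map (\<lambda>(a,b,c,d). a) zs, map (\<lambda>(a,b,c,d). b) zs,
                            map (\<lambda>(a,b,c,d). c) zs, map (\<lambda>(a,b,c,d). d) zs)) (iid_pmf n q))
         \<le> ennreal \<epsilon>"
    proof (rule exI[of _ n0], intro allI impI)
      fix n assume n: "n \<ge> n0"
      have n1: "n \<ge> 1" using n by (simp add: n0_def)
      have cn: "c / n \<le> \<epsilon>"
      proof -
        have "c / \<epsilon> \<le> real n"
        proof -
          have "c / \<epsilon> \<le> real_of_int \<lceil>c / \<epsilon>\<rceil>" by simp
          also have "\<dots> \<le> real (nat \<lceil>c / \<epsilon>\<rceil>)" by simp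
          also have "\<dots> \<le> real n"
          proof -
            have "nat \<lceil>c / \<epsilon>\<rceil> \<le> n" using n unfolding n0_def by linarith
            then show ?thesis by (simp only: of_nat_le_iff)
          qed
          finally show ?thesis .
        qed
        then have "c \<le> \<epsilon> * real n" using \<epsilon> by (simp add: field_simps)
        then show ?thesis using n1 \<epsilon> by (simp add: field_simps)
      qed
      have ce: "ennreal (c / n) \<le> ennreal \<epsilon>" by (rule ennreal_leI[OF cn])
      from main[OF n1] obtain P1 P2 e1 e2 d1 d2 where H: "let J = code_space n q P1 P2;
          C = (\<lambda>(xs, m1, m2). messages e1 e2 (map fst xs) (map snd xs) m1 m2 2);
          msg_law = (\<lambda>i. map_pmf (\<lambda>w. C w ! (i - 1)) J)
      in (\<Sum>i\<in>{i\<in>{1..2}. odd i}. entropy_pmf (msg_law i)) \<le> ennreal (real n * R12)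
       \<and> (\<Sum>i\<in>{i\<in>{1..2}. even i}. entropy_pmf (msg_law i)) \<le> ennreal (real n * R21)
       \<and> tv_dist
           (map_pmf (\<lambda>(xs, m1, m2). (map fst xs, map snd xs,
                  d1 (map fst xs) m1 (C (xs, m1, m2)), d2 (map snd xs) m2 (C (xs, m1, m2)))) J)
           (map_pmf (\<lambda>zs. (map (\<lambda>(a,b,c,d). a) zs, map (\<lambda>(a,b,c,d). b) zs,
                            map (\<lambda>(a,b,c,d). c) zs, map (\<lambda>(a,b,c,d). d) zs)) (iid_pmf n q))
         \<le> ennreal (c / n)" by blast
      show "\<exists>(P1::nat pmf) (P2::nat pmf)
        (e1::nat \<Rightarrow> 'x list \<Rightarrow> nat \<Rightarrow> nat list \<Rightarrow> nat) (e2::nat \<Rightarrow> 'x list \<Rightarrow> nat \<Rightarrow> nat list \<Rightarrow> nat)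
        (d1::'x list \<Rightarrow> nat \<Rightarrow> nat list \<Rightarrow> 'y1 list) (d2::'x list \<Rightarrow> nat \<Rightarrow> nat list \<Rightarrow> 'y2 list).
      let J = code_space n q P1 P2;
          C = (\<lambda>(xs, m1, m2). messages e1 e2 (map fst xs) (map snd xs) m1 m2 2);
          msg_law = (\<lambda>i. map_pmf (\<lambda>w. C w ! (i - 1)) J)
      in (\<Sum>i\<in>{i\<in>{1..2}. odd i}. entropy_pmf (msg_law i)) \<le> ennreal (real n * (\<Sum>i\<in>{i\<in>{1..r}. odd i}. R i))
       \<and> (\<Sum>i\<in>{i\<in>{1..2}. even i}. entropy_pmf (msg_law i)) \<le> ennreal (real n * (\<Sum>i\<in>{i\<in>{1..r}. even i}. R i))
       \<and> tv_dist
           (map_pmf (\<lambda>(xs, m1, m2). (map fst xs, map snd xs,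
                  d1 (map fst xs) m1 (C (xs, m1, m2)), d2 (map snd xs) m2 (C (xs, m1, m2)))) J)
           (map_pmf (\<lambda>zs. (map (\<lambda>(a,b,c,d). a) zs, map (\<lambda>(a,b,c,d). b) zs,
                            map (\<lambda>(a,b,c,d). c) zs, map (\<lambda>(a,b,c,d). d) zs)) (iid_pmf n q))
         \<le> ennreal \<epsilon>"
        apply (rule exI[of _ P1], rule exI[of _ P2], rule exI[of _ e1], rule exI[of _ e2], rule exI[of _ d1], rule exI[of _ d2])
        using H ce unfolding Let_def R12_def[symmetric] R21_def[symmetric]
        by (blast intro: order.trans)
    qed
  qed
qed

end
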